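(* For all $n\ge 1$, $$\sum_{\pi\in\mathcal D_n}t^{\mathsf{cyc}_D^+(\pi)}=t\prod_{i=2}^n(t+2i-1)\qquad\text{and}\qquad\sum_{\pi\in\mathcal D_n}t^{\tilde\ell'_D(\pi)}=\prod_{i=2}^n\bigl(1+(2i-1)t\bigr).$$
   Context: Signed permutations of $[n]$ are words $\pi=\pi_1\cdots\pi_n$ where $|\pi_1|\cdots|\pi_n|$ is a permutation $\sigma$ of $[n]$ and each letter may carry a bar ($\bar i=-i$); this is $\mathsf{G}_{2,n}=C_2\wr\mathfrak S_n$ with color $1$ meaning barred. $\mathcal D_n$ is the subgroup of signed permutations having an even number of barred letters. For $1\le|i|<j\le n$, $t^D_{ij}$ is the element such that $\pi\cdot t^D_{ij}$ (for $i>0$) swaps the letters in positions $i$ and $j$, and (for $i<0$) puts in position $j$ the letter from position $|i|$ with its sign changed and in position $|i|$ the letter from position $j$ with its sign changed; for $1<i\le n$, $t^D_{\bar i i}$ is the element such that $\pi\cdot t^D_{\bar ii}$ changes the signs of the letters in positions $1$ and $i$. $\tilde\ell'_D(\pi)$ is the minimal number of factors needed to write $\pi$ as a product of elements of $\mathcal T^D_n=\{t^D_{ij}:1\le|i|<j\le n\}\cup\{t^D_{\bar ii}:1<i\le n\}$. $\mathsf{Cyc}^0(\pi)$ is the set of minima of those cycles of $\sigma$ containing an even number of positions $k$ with $\pi_k$ barred; $\mathsf{cyc}^+_D(\pi)=|\mathsf{Cyc}^0(\pi)\cup\{1\}|$. *)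

theory Defs
  imports Main
begin

text \<open>A signed permutation of [n] is represented as a word \<pi> :: nat \<Rightarrow> int,
  \<pi> k being the letter in position k (1 \<le> k \<le> n); barred letters are negative;
  outside positions 1..n the function is 0 (canonical representation).\<close>

definition signed_perms :: "nat \<Rightarrow> (nat \<Rightarrow> int) set" where
  "signed_perms n = {\<pi>. bij_betw (\<lambda>k. nat \<bar>\<pi> k\<bar>) {1..n} {1..n} \<and>
                       (\<forall>k. k \<notin> {1..n} \<longrightarrow> \<pi> k = 0)}"

definition barred_positions :: "nat \<Rightarrow> (nat \<Rightarrow> int) \<Rightarrow> nat set" where
  "barred_positions n \<pi> = {k \<in> {1..n}. \<pi> k < 0}"

definition Dn :: "nat \<Rightarrow> (nat \<Rightarrow> int) set" where
  "Dn n = {\<pi> \<in> signed_perms n. even (card (barred_positions n \<pi>))}"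

definition sp_id :: "nat \<Rightarrow> nat \<Rightarrow> int" where
  "sp_id n k = (if k \<in> {1..n} then int k else 0)"

definition sp_mult :: "nat \<Rightarrow> (nat \<Rightarrow> int) \<Rightarrow> (nat \<Rightarrow> int) \<Rightarrow> nat \<Rightarrow> int" where
  "sp_mult n \<pi> \<tau> k = (if k \<in> {1..n} then sgn (\<tau> k) * \<pi> (nat \<bar>\<tau> k\<bar>) else 0)"

definition tD_pos :: "nat \<Rightarrow> nat \<Rightarrow> nat \<Rightarrow> nat \<Rightarrow> int" where
  "tD_pos n i j k = (if k \<in> {1..n} then
      (if k = i then int j else if k = j then int i else int k) else 0)"

text \<open>t^D_{\<bar>i j} (i.e. negative first index -i): position j gets the negated letter
  from position i and position i gets the negated letter from position j.\<close>
definition tD_neg :: "nat \<Rightarrow> nat \<Rightarrow> nat \<Rightarrow> nat \<Rightarrow> int" where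
  "tD_neg n i j k = (if k \<in> {1..n} then
      (if k = i then - int j else if k = j then - int i else int k) else 0)"

text \<open>t^D_{\<bar>i i}: changes the signs of the letters in positions 1 and i.\<close>
definition tD_bar :: "nat \<Rightarrow> nat \<Rightarrow> nat \<Rightarrow> int" where
  "tD_bar n i k = (if k \<in> {1..n} then
      (if k = 1 then -1 else if k = i then - int i else int k) else 0)"

definition TD :: "nat \<Rightarrow> (nat \<Rightarrow> int) set" where
  "TD n = {tD_pos n i j | i j. 1 \<le> i \<and> i < j \<and> j \<le> n}
        \<union> {tD_neg n i j | i j. 1 \<le> i \<and> i < j \<and> j \<le> n}
        \<union> {tD_bar n i | i. 1 < i \<and> i \<le> n}"

definition lenD :: "nat \<Rightarrow> (nat \<Rightarrow> int) \<Rightarrow> nat" where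
  "lenD n \<pi> = (LEAST m. \<exists>ws. length ws = m \<and> set ws \<subseteq> TD n \<and>
                              foldl (sp_mult n) (sp_id n) ws = \<pi>)"

definition sp_abs :: "(nat \<Rightarrow> int) \<Rightarrow> nat \<Rightarrow> nat" where
  "sp_abs \<pi> k = nat \<bar>\<pi> k\<bar>"

definition sp_cycle :: "(nat \<Rightarrow> int) \<Rightarrow> nat \<Rightarrow> nat set" where
  "sp_cycle \<pi> k = {(sp_abs \<pi> ^^ m) k | m. True}"

definition Cyc0 :: "nat \<Rightarrow> (nat \<Rightarrow> int) \<Rightarrow> nat set" where
  "Cyc0 n \<pi> = {k \<in> {1..n}. k = Min (sp_cycle \<pi> k) \<and>
                 even (card {j \<in> sp_cycle \<pi> k. \<pi> j < 0})}"

definition cycD_plus :: "nat \<Rightarrow> (nat \<Rightarrow> int) \<Rightarrow> nat" where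
  "cycD_plus n \<pi> = card (Cyc0 n \<pi> \<union> {1})"

end

theory Submission
  imports Defs
begin


definition orb :: "(nat \<Rightarrow> nat) \<Rightarrow> nat \<Rightarrow> nat set" where
  "orb f x = {(f ^^ m) x | m. True}"

lemma orb_self: "x \<in> orb f x"
  unfolding orb_def by (auto intro: exI[of _ 0])

lemma orb_step: "y \<in> orb f x \<Longrightarrow> f y \<in> orb f x"
  unfolding orb_def apply clarify subgoal for m by (rule exI[of _ "Suc m"]) simp done

lemma orb_sub: assumes "x \<in> S" "\<And>y. y \<in> S \<Longrightarrow> f y \<in> S" shows "orb f x \<subseteq> S"
proof -
  have "(f^^m) x \<in> S" for m by (induction m) (auto simp: assms)
  then show ?thesis unfolding orb_def by auto
qed

lemma orb_trans: "y \<in> orb f x \<Longrightarrow> orb f y \<subseteq> orb f x"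
  by (rule orb_sub) (auto intro: orb_step)

lemma orb_in: "bij_betw f A A \<Longrightarrow> x \<in> A \<Longrightarrow> orb f x \<subseteq> A"
  by (rule orb_sub) (auto dest: bij_betwE)

lemma bij_funpow: "bij_betw f A A \<Longrightarrow> bij_betw (f^^m) A A"
  by (induction m) (auto intro: bij_betw_trans simp: bij_betw_id)

lemma orb_period:
  fixes f :: "nat \<Rightarrow> nat"
  assumes "bij_betw f A A" "finite A" "x \<in> A"
  shows "\<exists>p>0. (f^^p) x = x"
proof -
  have inA: "(f^^m) x \<in> A" for m using orb_in[OF assms(1,3)] unfolding orb_def by auto
  have "\<not> inj_on (\<lambda>m. (f^^m) x) {0..card A}"
  proof
    assume "inj_on (\<lambda>m. (f^^m) x) {0..card A}"
    then have "card {0..card A} \<le> card A"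
      using card_inj_on_le[of _ "{0..card A}" A] inA assms(2) by auto
    then show False by simp
  qed
  then obtain a b where ab: "a \<le> card A" "b \<le> card A" "a \<noteq> b" "(f^^a) x = (f^^b) x"
    unfolding inj_on_def by auto
  then obtain a b where ab: "a < b" "(f^^a) x = (f^^b) x"
    by (metis linorder_neqE_nat)
  have "(f^^a) ((f^^(b-a)) x) = (f^^b) x"
    using ab(1) by (metis funpow_add le_add_diff_inverse less_imp_le comp_apply)
  then have "(f^^a) ((f^^(b-a)) x) = (f^^a) x" using ab by simp
  moreover have "inj_on (f^^a) A" using bij_funpow[OF assms(1)] bij_betw_def by blast
  ultimately have "(f^^(b-a)) x = x" using inA assms(3) unfolding inj_on_def by blast
  then show ?thesis using ab(1) by (intro exI[of _ "b-a"]) auto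
qed

lemma orb_sym:
  assumes "bij_betw f A A" "finite A" "x \<in> A" "y \<in> orb f x"
  shows "x \<in> orb f y"
proof -
  obtain p where p: "p > 0" "(f^^p) x = x" using orb_period[OF assms(1-3)] by blast
  obtain m where m: "y = (f^^m) x" using assms(4) unfolding orb_def by auto
  define r where "r = m mod p"
  have y: "y = (f^^r) x" unfolding r_def m using funpow_mod_eq[where f=f and n=p and x=x and m=m] p by simp
  have "r < p" unfolding r_def using p by simp
  then have "(f^^(p-r)) y = (f^^p) x" unfolding y by (metis funpow_add le_add_diff_inverse2 less_imp_le comp_apply)
  then show ?thesis using p unfolding orb_def by (auto intro!: exI[of _ "p-r"])
qed

lemma orb_eq:
  assumes "bij_betw f A A" "finite A" "x \<in> A" "y \<in> orb f x"
  shows "orb f y = orb f x"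
  using orb_trans[OF assms(4)] orb_trans[OF orb_sym[OF assms]] by blast

lemma orb_cong:
  assumes "\<And>y. y \<in> orb f x \<Longrightarrow> g y = f y" shows "orb g x = orb f x"
proof -
  have "(g^^m) x = (f^^m) x" for m
  proof (induction m)
    case (Suc m)
    have "(f^^m) x \<in> orb f x" unfolding orb_def by auto
    then show ?case using Suc assms by simp
  qed simp
  then show ?thesis unfolding orb_def by auto
qed

definition sw :: "(nat \<Rightarrow> nat) \<Rightarrow> nat \<Rightarrow> nat \<Rightarrow> nat \<Rightarrow> nat" where
  "sw f i j = (\<lambda>y. if y = i then f j else if y = j then f i else f y)"

lemma sw_bij:
  assumes "bij_betw f A A" "i \<in> A" "j \<in> A"
  shows "bij_betw (sw f i j) A A"
proof -
  define \<tau> where "\<tau> = (\<lambda>y::nat. if y = i then j else if y = j then i else y)"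
  have "bij_betw \<tau> A A"
    by (rule bij_betw_byWitness[of _ \<tau>]) (auto simp: \<tau>_def assms)
  moreover have "sw f i j = f \<circ> \<tau>" by (auto simp: sw_def \<tau>_def fun_eq_iff)
  ultimately show ?thesis using assms(1) bij_betw_trans by metis
qed

lemma orb_sw_avoid: "i \<notin> orb f x \<Longrightarrow> j \<notin> orb f x \<Longrightarrow> orb (sw f i j) x = orb f x"
  by (rule orb_cong) (auto simp: sw_def)

lemma orb_sw_merge:
  assumes f: "bij_betw f A A" "finite A" and ij: "i \<in> A" "j \<in> A" "j \<notin> orb f i"
  shows "orb (sw f i j) i = orb f i \<union> orb f j"
proof
  let ?g = "sw f i j"
  have ne: "i \<noteq> j" using ij orb_self by metis
  have ni: "i \<notin> orb f j" using orb_sym[OF f ij(2)] ij(3) by blast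
  show "orb ?g i \<subseteq> orb f i \<union> orb f j"
    by (rule orb_sub) (auto simp: sw_def orb_self intro: orb_step)
  have gi: "f j \<in> orb ?g i" using orb_step[OF orb_self, of ?g i] by (simp add: sw_def)
  have A: "(f^^(Suc m)) j \<in> orb ?g i" for m
  proof (induction m)
    case 0 then show ?case using gi by simp
  next
    case (Suc m)
    define y where "y = (f^^(Suc m)) j"
    have yo: "y \<in> orb f j" unfolding y_def orb_def by blast
    show ?case
    proof (cases "y = j")
      case True
      have "(f^^Suc(Suc m)) j = f y" by (simp add: y_def)
      then show ?thesis using gi True by simp
    next
      case False
      then have "y \<noteq> i" using yo ni by blast
      then have "f y = ?g y" using False by (simp add: sw_def)
      then show ?thesis using orb_step[OF Suc[folded y_def], of] by (simp add: y_def)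
    qed
  qed
  have B: "orb f j \<subseteq> orb ?g i"
  proof
    fix y assume "y \<in> orb f j"
    then obtain m where m: "y = (f^^m) j" unfolding orb_def by auto
    show "y \<in> orb ?g i"
    proof (cases m)
      case 0
      obtain p where p: "p > 0" "(f^^p) j = j" using orb_period[OF f ij(2)] by blast
      then obtain q where "p = Suc q" using not0_implies_Suc by blast
      then show ?thesis using A[of q] p 0 m by simp
    next
      case (Suc q) then show ?thesis using A m by simp
    qed
  qed
  have C: "(f^^m) i \<in> orb ?g i" for m
  proof (induction m)
    case 0 then show ?case using orb_self by simp
  next
    case (Suc m)
    define y where "y = (f^^m) i"
    have yo: "y \<in> orb f i" unfolding y_def orb_def by blast
    show ?case
    proof (cases "y = i")
      case True
      have "j \<in> orb ?g i" using B orb_self by blast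
      then have "?g j \<in> orb ?g i" by (rule orb_step)
      then show ?thesis using True ne by (simp add: sw_def y_def)
    next
      case False
      then have "y \<noteq> j" using yo ij(3) by blast
      then have "f y = ?g y" using False by (simp add: sw_def)
      then show ?thesis using orb_step[OF Suc[folded y_def]] by (simp add: y_def)
    qed
  qed
  show "orb f i \<union> orb f j \<subseteq> orb ?g i" using B C unfolding orb_def by blast
qed


definition cls :: "nat set \<Rightarrow> (nat \<Rightarrow> nat) \<Rightarrow> nat set set" where
  "cls A f = (\<lambda>x. orb f x) ` A"

lemma cls_avoid:
  assumes f: "bij_betw f A A" "finite A" and C: "C \<in> cls A f" "C \<noteq> orb f i"
  shows "i \<notin> C"
proof
  assume i: "i \<in> C"
  obtain x where x: "x \<in> A" "C = orb f x" using C unfolding cls_def by auto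
  show False using orb_eq[OF f x(1), of i] i x C by auto
qed

lemma orb_disj:
  assumes f: "bij_betw f A A" "finite A" "i \<in> A" "j \<in> A" "j \<notin> orb f i"
  shows "orb f i \<inter> orb f j = {}"
proof (rule ccontr)
  assume "orb f i \<inter> orb f j \<noteq> {}"
  then obtain y where y: "y \<in> orb f i" "y \<in> orb f j" by auto
  have "orb f i = orb f j" using orb_eq[OF f(1,2,3) y(1)] orb_eq[OF f(1,2,4) y(2)] by simp
  then show False using f(5) orb_self by metis
qed

lemma cls_merge:
  assumes f: "bij_betw f A A" "finite A" and ij: "i \<in> A" "j \<in> A" "j \<notin> orb f i"
  shows "cls A (sw f i j) = insert (orb f i \<union> orb f j) (cls A f - {orb f i, orb f j})"
proof -
  let ?g = "sw f i j"
  have g: "bij_betw ?g A A" using sw_bij f ij by blast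
  have M: "orb ?g i = orb f i \<union> orb f j" by (rule orb_sw_merge[OF f ij])
  have a: "orb ?g x = orb f i \<union> orb f j" if "x \<in> A" "x \<in> orb f i \<union> orb f j" for x
    using orb_eq[OF g f(2) ij(1), of x] M that by auto
  have b: "orb ?g x = orb f x \<and> orb f x \<noteq> orb f i \<and> orb f x \<noteq> orb f j"
    if "x \<in> A" "x \<notin> orb f i \<union> orb f j" for x
  proof -
    have "i \<notin> orb f x" using orb_sym[OF f(1,2) that(1)] that(2) by blast
    moreover have "j \<notin> orb f x" using orb_sym[OF f(1,2) that(1)] that(2) by blast
    ultimately show ?thesis using orb_sw_avoid[of i f x j] orb_self[of x f] that(2) by auto
  qed
  show ?thesis
  proof
    show "cls A ?g \<subseteq> insert (orb f i \<union> orb f j) (cls A f - {orb f i, orb f j})"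
    proof
      fix C assume "C \<in> cls A ?g"
      then obtain x where x: "x \<in> A" "C = orb ?g x" unfolding cls_def by auto
      show "C \<in> insert (orb f i \<union> orb f j) (cls A f - {orb f i, orb f j})"
      proof (cases "x \<in> orb f i \<union> orb f j")
        case True then show ?thesis using a x by auto
      next
        case False then show ?thesis using b[OF x(1) False] x unfolding cls_def by auto
      qed
    qed
    show "insert (orb f i \<union> orb f j) (cls A f - {orb f i, orb f j}) \<subseteq> cls A ?g"
    proof
      fix C assume C: "C \<in> insert (orb f i \<union> orb f j) (cls A f - {orb f i, orb f j})"
      show "C \<in> cls A ?g"
      proof (cases "C = orb f i \<union> orb f j")
        case True then show ?thesis using M ij unfolding cls_def by auto
      next
        case False
        then have C2: "C \<in> cls A f" "C \<noteq> orb f i" "C \<noteq> orb f j" using C by auto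
        then obtain x where x: "x \<in> A" "C = orb f x" unfolding cls_def by auto
        have "x \<notin> orb f i" using orb_eq[OF f(1,2) ij(1), of x] C2 x by auto
        moreover have "x \<notin> orb f j" using orb_eq[OF f(1,2) ij(2), of x] C2 x by auto
        ultimately show ?thesis using b[OF x(1)] x unfolding cls_def by auto
      qed
    qed
  qed
qed

lemma cls_split:
  assumes f: "bij_betw f A A" "finite A" and ij: "i \<in> A" "j \<in> A" "j \<in> orb f i"
    and C: "C \<in> cls A f" "C \<noteq> orb f i"
  shows "C \<in> cls A (sw f i j) \<and> i \<notin> C \<and> j \<notin> C"
proof -
  have i: "i \<notin> C" by (rule cls_avoid[OF f C])
  have "orb f j = orb f i" using orb_eq[OF f ij(1,3)] .
  then have j: "j \<notin> C" using cls_avoid[OF f C(1), of j] C(2) by auto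
  obtain x where x: "x \<in> A" "C = orb f x" using C unfolding cls_def by auto
  have "orb (sw f i j) x = C" using orb_sw_avoid[of i f x j] i j x by auto
  then show ?thesis using i j x unfolding cls_def by auto
qed

lemma cls_finite: "finite A \<Longrightarrow> finite (cls A f)"
  unfolding cls_def by simp

lemma cls_sub: "bij_betw f A A \<Longrightarrow> C \<in> cls A f \<Longrightarrow> C \<subseteq> A"
  unfolding cls_def using orb_in by blast


section \<open>Signed permutation basics\<close>

lemma SP_bij: "\<pi> \<in> signed_perms n \<Longrightarrow> bij_betw (sp_abs \<pi>) {1..n} {1..n}"
  unfolding signed_perms_def sp_abs_def by simp

lemma SP_zero: "\<pi> \<in> signed_perms n \<Longrightarrow> k \<notin> {1..n} \<Longrightarrow> \<pi> k = 0"
  unfolding signed_perms_def by simp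

lemma SP_range: "\<pi> \<in> signed_perms n \<Longrightarrow> k \<in> {1..n} \<Longrightarrow> sp_abs \<pi> k \<in> {1..n}"
  using SP_bij bij_betwE by blast

lemma SP_nz: "\<pi> \<in> signed_perms n \<Longrightarrow> k \<in> {1..n} \<Longrightarrow> \<pi> k \<noteq> 0"
  using SP_range[of \<pi> n k] by (auto simp: sp_abs_def)

lemma SP_abs_zero: "\<pi> \<in> signed_perms n \<Longrightarrow> sp_abs \<pi> 0 = 0"
  using SP_zero[of \<pi> n 0] by (simp add: sp_abs_def)

definition par :: "(nat \<Rightarrow> int) \<Rightarrow> nat set \<Rightarrow> int" where
  "par \<pi> C = (\<Prod>j\<in>C. sgn (\<pi> j))"

definition wt :: "(nat \<Rightarrow> int) \<Rightarrow> nat set \<Rightarrow> bool" where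
  "wt \<pi> C = (par \<pi> C = 1 \<or> 1 \<in> C)"

definition cc :: "nat \<Rightarrow> (nat \<Rightarrow> int) \<Rightarrow> nat" where
  "cc n \<pi> = card {C \<in> cls {1..n} (sp_abs \<pi>). wt \<pi> C}"

lemma par_pow:
  assumes "finite C" "\<forall>j\<in>C. \<pi> j \<noteq> 0"
  shows "par \<pi> C = (-1) ^ card {j\<in>C. \<pi> j < 0}"
  using assms
proof (induction C rule: finite_induct)
  case empty then show ?case by (simp add: par_def)
next
  case (insert x F)
  have fin: "finite {j\<in>F. \<pi> j < 0}" using insert by simp
  have e: "{j\<in>insert x F. \<pi> j < 0} = (if \<pi> x < 0 then insert x {j\<in>F. \<pi> j < 0} else {j\<in>F. \<pi> j < 0})"
    by auto
  have "par \<pi> (insert x F) = sgn (\<pi> x) * par \<pi> F" using insert by (simp add: par_def)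
  then show ?case using insert e fin by (auto simp: sgn_if)
qed

lemma par_even:
  assumes "finite C" "\<forall>j\<in>C. \<pi> j \<noteq> 0"
  shows "par \<pi> C = 1 \<longleftrightarrow> even (card {j\<in>C. \<pi> j < 0})"
  using par_pow[OF assms] by (cases "even (card {j\<in>C. \<pi> j < 0})") auto

lemma Dn_iff: "\<pi> \<in> Dn n \<longleftrightarrow> \<pi> \<in> signed_perms n \<and> par \<pi> {1..n} = 1"
proof -
  have "\<pi> \<in> signed_perms n \<Longrightarrow> par \<pi> {1..n} = 1 \<longleftrightarrow> even (card (barred_positions n \<pi>))"
    using par_even[of "{1..n}" \<pi>] SP_nz[of \<pi> n] by (simp add: barred_positions_def)
  then show ?thesis unfolding Dn_def by auto
qed

lemma sp_cycle_orb: "sp_cycle \<pi> k = orb (sp_abs \<pi>) k"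
  unfolding sp_cycle_def orb_def by simp

lemma cyc_cc:
  assumes \<pi>: "\<pi> \<in> signed_perms n" and n: "1 \<le> n"
  shows "cycD_plus n \<pi> = cc n \<pi>"
proof -
  let ?f = "sp_abs \<pi>"
  let ?S = "{C \<in> cls {1..n} ?f. wt \<pi> C}"
  have f: "bij_betw ?f {1..n} {1..n}" "finite {1..n}" using SP_bij[OF \<pi>] by auto
  have Cprops: "finite C \<and> C \<noteq> {} \<and> C \<subseteq> {1..n} \<and> Min C \<in> C \<and> orb ?f (Min C) = C"
    if Cc: "C \<in> cls {1..n} ?f" for C
  proof -
    obtain x where x: "x \<in> {1..n}" "C = orb ?f x" using Cc unfolding cls_def by auto
    have sub: "C \<subseteq> {1..n}" using orb_in[OF f(1) x(1)] x by simp
    have ne: "C \<noteq> {}" using orb_self[of x ?f] x by auto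
    have fin: "finite C" using sub finite_subset by blast
    have m: "Min C \<in> C" using fin ne by simp
    show ?thesis using sub ne fin m orb_eq[OF f x(1), of "Min C"] x by simp
  qed
  have nz: "\<forall>j\<in>C. \<pi> j \<noteq> 0" if "C \<subseteq> {1..n}" for C using SP_nz[OF \<pi>] that by auto
  have eq: "Cyc0 n \<pi> \<union> {1} = Min ` ?S"
  proof
    show "Cyc0 n \<pi> \<union> {1} \<subseteq> Min ` ?S"
    proof
      fix k assume k: "k \<in> Cyc0 n \<pi> \<union> {1}"
      show "k \<in> Min ` ?S"
      proof (cases "k = 1")
        case True
        have c: "orb ?f 1 \<in> cls {1..n} ?f" using n unfolding cls_def by auto
        have w: "wt \<pi> (orb ?f 1)" using orb_self unfolding wt_def by metis
        have "Min (orb ?f 1) = 1" using Cprops[OF c] orb_self[of 1 ?f]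
          by (metis Min_le antisym atLeastAtMost_iff subsetD)
        then show ?thesis using c w True by (metis (mono_tags, lifting) image_eqI mem_Collect_eq)
      next
        case False
        then have k: "k \<in> {1..n}" "k = Min (orb ?f k)" "even (card {j \<in> orb ?f k. \<pi> j < 0})"
          using k unfolding Cyc0_def sp_cycle_orb by auto
        have c: "orb ?f k \<in> cls {1..n} ?f" using k unfolding cls_def by auto
        have "par \<pi> (orb ?f k) = 1" using par_even[of "orb ?f k" \<pi>] Cprops[OF c] nz k by auto
        then show ?thesis using c k unfolding wt_def by (metis (mono_tags, lifting) image_eqI mem_Collect_eq)
      qed
    qed
    show "Min ` ?S \<subseteq> Cyc0 n \<pi> \<union> {1}"
    proof
      fix k assume "k \<in> Min ` ?S"
      then obtain C where C: "C \<in> cls {1..n} ?f" "wt \<pi> C" "k = Min C" by auto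
      note P = Cprops[OF C(1)]
      show "k \<in> Cyc0 n \<pi> \<union> {1}"
      proof (cases "par \<pi> C = 1")
        case True
        then have "even (card {j \<in> C. \<pi> j < 0})" using par_even[of C \<pi>] P nz by auto
        then show ?thesis using P C unfolding Cyc0_def sp_cycle_orb by auto
      next
        case False
        then have "1 \<in> C" using C unfolding wt_def by auto
        then have "k = 1" using P C by (metis Min_le antisym atLeastAtMost_iff subsetD)
        then show ?thesis by simp
      qed
    qed
  qed
  have inj: "inj_on Min ?S"
  proof (rule inj_onI)
    fix C D assume "C \<in> ?S" "D \<in> ?S" "Min C = Min D"
    then show "C = D" using Cprops by (metis (no_types, lifting) mem_Collect_eq)
  qed
  show ?thesis unfolding cycD_plus_def cc_def eq using card_image[OF inj] by simp
qed




section \<open>Multiplication\<close>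

lemma mult_abs:
  assumes "\<pi> \<in> signed_perms n" "g \<in> signed_perms n"
  shows "sp_abs (sp_mult n \<pi> g) = sp_abs \<pi> \<circ> sp_abs g"
proof
  fix k
  show "sp_abs (sp_mult n \<pi> g) k = (sp_abs \<pi> \<circ> sp_abs g) k"
  proof (cases "k \<in> {1..n}")
    case True
    then have "g k \<noteq> 0" using SP_nz assms(2) by blast
    then show ?thesis using True by (simp add: sp_mult_def sp_abs_def abs_mult abs_sgn_eq)
  next
    case False
    then show ?thesis using SP_zero[OF assms(2) False] SP_abs_zero[OF assms(1)]
      by (simp add: sp_mult_def sp_abs_def)
  qed
qed

lemma mult_SP:
  assumes "\<pi> \<in> signed_perms n" "g \<in> signed_perms n"
  shows "sp_mult n \<pi> g \<in> signed_perms n"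
proof -
  have "bij_betw (sp_abs (sp_mult n \<pi> g)) {1..n} {1..n}"
    unfolding mult_abs[OF assms] using SP_bij[OF assms(1)] SP_bij[OF assms(2)] bij_betw_trans by blast
  then show ?thesis unfolding signed_perms_def sp_abs_def by (auto simp: sp_mult_def)
qed

lemma par_mult:
  assumes "\<pi> \<in> signed_perms n" "g \<in> signed_perms n" "C \<subseteq> {1..n}" "sp_abs g ` C = C"
  shows "par (sp_mult n \<pi> g) C = par g C * par \<pi> C"
proof -
  have "par (sp_mult n \<pi> g) C = (\<Prod>k\<in>C. sgn (g k) * sgn (\<pi> (sp_abs g k)))"
    unfolding par_def
  proof (intro prod.cong refl)
    fix k assume "k \<in> C"
    then have "k \<in> {1..n}" using assms(3) by blast
    then have "sp_mult n \<pi> g k = sgn (g k) * \<pi> (sp_abs g k)" by (simp add: sp_mult_def sp_abs_def)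
    moreover have "sgn (sgn a * b) = sgn a * sgn b" for a b :: int by (simp add: sgn_mult)
    ultimately show "sgn (sp_mult n \<pi> g k) = sgn (g k) * sgn (\<pi> (sp_abs g k))" by simp
  qed
  also have "\<dots> = par g C * (\<Prod>k\<in>C. sgn (\<pi> (sp_abs g k)))"
    by (simp add: prod.distrib par_def)
  also have "(\<Prod>k\<in>C. sgn (\<pi> (sp_abs g k))) = par \<pi> C"
  proof -
    have inj: "inj_on (sp_abs g) C" using inj_on_subset[OF bij_betw_imp_inj_on[OF SP_bij[OF assms(2)]] assms(3)] .
    have "(\<Prod>j\<in>sp_abs g ` C. sgn (\<pi> j)) = (\<Prod>k\<in>C. sgn (\<pi> (sp_abs g k)))"
      using prod.reindex[OF inj, of "\<lambda>j. sgn (\<pi> j)"] by (simp add: comp_def)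
    then show ?thesis unfolding par_def assms(4) by simp
  qed
  finally show ?thesis .
qed

lemma Dn_mult:
  assumes "\<pi> \<in> Dn n" "g \<in> Dn n"
  shows "sp_mult n \<pi> g \<in> Dn n"
proof -
  have s: "\<pi> \<in> signed_perms n" "g \<in> signed_perms n" using assms Dn_iff by auto
  have "sp_abs g ` {1..n} = {1..n}" using SP_bij[OF s(2)] bij_betw_imp_surj_on by blast
  then have "par (sp_mult n \<pi> g) {1..n} = 1" using par_mult[OF s] assms Dn_iff by auto
  then show ?thesis using mult_SP[OF s] Dn_iff by auto
qed

lemma prod_two:
  fixes a b :: nat
  assumes "finite C" "a \<noteq> b"
  shows "(\<Prod>k\<in>C. (if k = a \<or> k = b then -1 else 1 :: int)) = (if a \<in> C then -1 else 1) * (if b \<in> C then -1 else 1)"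
  using assms
proof (induction C rule: finite_induct)
  case empty then show ?case by simp
next
  case (insert x F)
  let ?h = "\<lambda>k. (if k = a \<or> k = b then -1 else 1 :: int)"
  have e: "(\<Prod>k\<in>insert x F. ?h k) = ?h x * (\<Prod>k\<in>F. ?h k)" using insert(1,2) by (rule prod.insert)
  consider "x = a" | "x = b" | "x \<noteq> a" "x \<noteq> b" by blast
  then show ?case
  proof cases
    case 1 then show ?thesis using e insert by (simp only: if_True if_False insert_iff simp_thms; simp?)
  next
    case 2 then show ?thesis using e insert by (simp only: if_True if_False insert_iff simp_thms; simp?)
  next
    case 3 then show ?thesis using e insert by (simp only: if_True if_False insert_iff simp_thms; simp?)
  qed
qed

lemma tD_pos_abs: "sp_abs (tD_pos n i j) = (\<lambda>k. if k \<in> {1..n} then (if k = i then j else if k = j then i else k) else 0)"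
  by (auto simp: sp_abs_def tD_pos_def fun_eq_iff)

lemma tD_neg_abs: "sp_abs (tD_neg n i j) = (\<lambda>k. if k \<in> {1..n} then (if k = i then j else if k = j then i else k) else 0)"
  by (auto simp: sp_abs_def tD_neg_def fun_eq_iff)

lemma tD_bar_abs: "1 \<le> i \<Longrightarrow> i \<le> n \<Longrightarrow> sp_abs (tD_bar n i) = (\<lambda>k. if k \<in> {1..n} then k else 0)"
  by (auto simp: sp_abs_def tD_bar_def fun_eq_iff)

lemma sp_id_abs: "sp_abs (sp_id n) = (\<lambda>k. if k \<in> {1..n} then k else 0)"
  by (auto simp: sp_abs_def sp_id_def fun_eq_iff)

lemma swap_bij: "i \<in> {1..n} \<Longrightarrow> j \<in> {1..n} \<Longrightarrow>
  bij_betw (\<lambda>k. if k \<in> {1..n} then (if k = i then j else if k = j then i else k) else 0) {1..n} {1..n}"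
  by (rule bij_betw_byWitness[where f'="\<lambda>k. if k \<in> {1..n} then (if k = i then j else if k = j then i else k) else 0"]) auto

lemma idl_bij: "bij_betw (\<lambda>k. if k \<in> {1..n} then k else 0) {1..n} {1..n}"
  by (rule bij_betw_byWitness[where f'="\<lambda>k. if k \<in> {1..n} then k else 0"]) auto

lemma SP_intro: "bij_betw (sp_abs \<pi>) {1..n} {1..n} \<Longrightarrow> (\<And>k. k \<notin> {1..n} \<Longrightarrow> \<pi> k = 0) \<Longrightarrow> \<pi> \<in> signed_perms n"
  unfolding signed_perms_def sp_abs_def by simp

lemma tD_pos_SP: "1 \<le> i \<Longrightarrow> i < j \<Longrightarrow> j \<le> n \<Longrightarrow> tD_pos n i j \<in> signed_perms n"
  by (rule SP_intro, unfold tD_pos_abs, rule swap_bij) (auto simp: tD_pos_def)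

lemma tD_neg_SP: "1 \<le> i \<Longrightarrow> i < j \<Longrightarrow> j \<le> n \<Longrightarrow> tD_neg n i j \<in> signed_perms n"
  by (rule SP_intro, unfold tD_neg_abs, rule swap_bij) (auto simp: tD_neg_def)

lemma tD_bar_SP: "1 < i \<Longrightarrow> i \<le> n \<Longrightarrow> tD_bar n i \<in> signed_perms n"
  by (rule SP_intro, subst tD_bar_abs, simp, simp, rule idl_bij) (auto simp: tD_bar_def)

lemma sp_id_SP: "sp_id n \<in> signed_perms n"
  by (rule SP_intro, unfold sp_id_abs, rule idl_bij) (auto simp: sp_id_def)

lemma tD_pos_par: "1 \<le> i \<Longrightarrow> i < j \<Longrightarrow> j \<le> n \<Longrightarrow> C \<subseteq> {1..n} \<Longrightarrow> par (tD_pos n i j) C = 1"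
  unfolding par_def by (rule prod.neutral) (auto simp: tD_pos_def)

lemma tD_neg_par: "1 \<le> i \<Longrightarrow> i < j \<Longrightarrow> j \<le> n \<Longrightarrow> C \<subseteq> {1..n} \<Longrightarrow>
   par (tD_neg n i j) C = (if i \<in> C then -1 else 1) * (if j \<in> C then -1 else 1)"
proof -
  assume a: "1 \<le> i" "i < j" "j \<le> n" "C \<subseteq> {1..n}"
  have "par (tD_neg n i j) C = (\<Prod>k\<in>C. (if k = i \<or> k = j then -1 else 1 :: int))"
    unfolding par_def using a by (intro prod.cong) (auto simp: tD_neg_def)
  then show ?thesis using prod_two[of C i j] a finite_subset by fastforce
qed

lemma tD_bar_par: "1 < i \<Longrightarrow> i \<le> n \<Longrightarrow> C \<subseteq> {1..n} \<Longrightarrow>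
   par (tD_bar n i) C = (if 1 \<in> C then -1 else 1) * (if i \<in> C then -1 else 1)"
proof -
  assume a: "1 < i" "i \<le> n" "C \<subseteq> {1..n}"
  have "par (tD_bar n i) C = (\<Prod>k\<in>C. (if k = 1 \<or> k = i then -1 else 1 :: int))"
    unfolding par_def using a by (intro prod.cong) (auto simp: tD_bar_def)
  then show ?thesis using prod_two[of C 1 i] a finite_subset by fastforce
qed

lemma sp_id_par: "C \<subseteq> {1..n} \<Longrightarrow> par (sp_id n) C = 1"
  unfolding par_def by (rule prod.neutral) (auto simp: sp_id_def)

lemma gens_Dn:
  "1 \<le> i \<Longrightarrow> i < j \<Longrightarrow> j \<le> n \<Longrightarrow> tD_pos n i j \<in> Dn n"
  "1 \<le> i \<Longrightarrow> i < j \<Longrightarrow> j \<le> n \<Longrightarrow> tD_neg n i j \<in> Dn n"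
  "1 < i \<Longrightarrow> i \<le> n \<Longrightarrow> tD_bar n i \<in> Dn n"
  "sp_id n \<in> Dn n"
  by (auto simp: Dn_iff tD_pos_SP tD_neg_SP tD_bar_SP sp_id_SP tD_pos_par tD_neg_par tD_bar_par sp_id_par)

lemma TD_SP: "g \<in> TD n \<Longrightarrow> g \<in> signed_perms n"
  unfolding TD_def by (auto intro: tD_pos_SP tD_neg_SP tD_bar_SP)

lemma mult_swap_abs:
  assumes "\<pi> \<in> signed_perms n" "1 \<le> i" "i < j" "j \<le> n" "g = tD_pos n i j \<or> g = tD_neg n i j"
  shows "sp_abs (sp_mult n \<pi> g) = sw (sp_abs \<pi>) i j"
proof -
  have g: "g \<in> signed_perms n" using assms tD_pos_SP tD_neg_SP by blast
  have z: "sp_abs \<pi> k = 0" if "k \<notin> {1..n}" for k using SP_zero[OF assms(1) that] by (simp add: sp_abs_def)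
  have "sp_abs g = (\<lambda>k. if k \<in> {1..n} then (if k = i then j else if k = j then i else k) else 0)"
    using assms(5) tD_pos_abs tD_neg_abs by metis
  then show ?thesis unfolding mult_abs[OF assms(1) g] using assms(2-4) z SP_abs_zero[OF assms(1)]
    by (auto simp: sw_def fun_eq_iff)
qed

lemma mult_swap_val:
  assumes "\<pi> \<in> signed_perms n" "1 \<le> i" "i < j" "j \<le> n" "g = tD_pos n i j \<or> g = tD_neg n i j"
    "k \<noteq> i" "k \<noteq> j"
  shows "sp_mult n \<pi> g k = \<pi> k"
  using assms SP_zero[OF assms(1)] by (auto simp: sp_mult_def tD_pos_def tD_neg_def)

lemma mult_bar_abs:
  assumes "\<pi> \<in> signed_perms n" "1 < i" "i \<le> n"
  shows "sp_abs (sp_mult n \<pi> (tD_bar n i)) = sp_abs \<pi>"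
proof -
  have g: "tD_bar n i \<in> signed_perms n" using assms tD_bar_SP by blast
  have z: "sp_abs \<pi> k = 0" if "k \<notin> {1..n}" for k using SP_zero[OF assms(1) that] by (simp add: sp_abs_def)
  have b: "sp_abs (tD_bar n i) = (\<lambda>k. if k \<in> {1..n} then k else 0)" using tD_bar_abs assms(2,3) by simp
  show ?thesis unfolding mult_abs[OF assms(1) g] b using z SP_abs_zero[OF assms(1)]
    by (auto simp: fun_eq_iff)
qed

lemma mult_bar_val:
  assumes "\<pi> \<in> signed_perms n" "1 < i" "i \<le> n" "k \<noteq> 1" "k \<noteq> i"
  shows "sp_mult n \<pi> (tD_bar n i) k = \<pi> k"
  using assms SP_zero[OF assms(1)] by (auto simp: sp_mult_def tD_bar_def)



lemma card_filter_sum: "finite A \<Longrightarrow> card {x\<in>A. P x} = (\<Sum>x\<in>A. if P x then 1 else 0)"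
  by (simp add: sum.inter_filter[symmetric])

lemma par_cong: "(\<And>k. k \<in> C \<Longrightarrow> \<pi>' k = \<pi> k) \<Longrightarrow> par \<pi>' C = par \<pi> C"
  unfolding par_def by (rule prod.cong) auto

lemma wt_cong: "(\<And>k. k \<in> C \<Longrightarrow> \<pi>' k = \<pi> k) \<Longrightarrow> wt \<pi>' C = wt \<pi> C"
  unfolding wt_def using par_cong by metis

lemma cc_finite: "finite (cls {1..n} f)" by (rule cls_finite) simp

lemma sub_count:
  assumes "{C \<in> cls {1..n} (sp_abs \<pi>). wt \<pi> C} - {D0} \<subseteq> {C \<in> cls {1..n} (sp_abs \<pi>'). wt \<pi>' C}"
  shows "cc n \<pi> \<le> cc n \<pi>' + 1"
proof -
  let ?S = "{C \<in> cls {1..n} (sp_abs \<pi>). wt \<pi> C}"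
  let ?S' = "{C \<in> cls {1..n} (sp_abs \<pi>'). wt \<pi>' C}"
  have f: "finite ?S" "finite ?S'" using cc_finite by auto
  have "card ?S \<le> card (?S - {D0}) + 1"
    by (cases "D0 \<in> ?S") (simp_all add: card_Diff_singleton)
  also have "card (?S - {D0}) \<le> card ?S'" using card_mono[OF f(2) assms] .
  finally show ?thesis unfolding cc_def by simp
qed

lemma merge_count:
  assumes \<pi>: "\<pi> \<in> signed_perms n" and ab: "sp_abs \<pi>' = sw (sp_abs \<pi>) i j"
    and ij: "i \<in> {1..n}" "j \<in> {1..n}" "j \<notin> orb (sp_abs \<pi>) i"
    and same: "\<And>C. C \<in> cls {1..n} (sp_abs \<pi>) \<Longrightarrow> i \<notin> C \<Longrightarrow> j \<notin> C \<Longrightarrow> wt \<pi>' C = wt \<pi> C"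
  shows "cc n \<pi>' + (if wt \<pi> (orb (sp_abs \<pi>) i) then 1 else 0) + (if wt \<pi> (orb (sp_abs \<pi>) j) then 1 else 0)
       = cc n \<pi> + (if wt \<pi>' (orb (sp_abs \<pi>) i \<union> orb (sp_abs \<pi>) j) then 1 else 0)"
proof -
  let ?f = "sp_abs \<pi>"
  let ?Oi = "orb ?f i" and ?Oj = "orb ?f j"
  let ?M = "?Oi \<union> ?Oj"
  let ?R = "cls {1..n} ?f - {?Oi, ?Oj}"
  have f: "bij_betw ?f {1..n} {1..n}" "finite {1..n}" using SP_bij[OF \<pi>] by auto
  have c': "cls {1..n} (sp_abs \<pi>') = insert ?M ?R" unfolding ab by (rule cls_merge[OF f ij])
  have Ri: "i \<notin> C" "j \<notin> C" if "C \<in> ?R" for C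
    using cls_avoid[OF f, of C i] cls_avoid[OF f, of C j] that by auto
  have MR: "?M \<notin> ?R"
  proof
    assume "?M \<in> ?R"
    then show False using Ri[of ?M] orb_self[of i ?f] by auto
  qed
  have ne: "?Oi \<noteq> ?Oj" using ij(3) orb_self[of j ?f] by auto
  have c: "cls {1..n} ?f = insert ?Oi (insert ?Oj ?R)" using ij unfolding cls_def by auto
  have finR: "finite ?R" using cc_finite by auto
  have s1: "cc n \<pi>' = (\<Sum>C\<in>insert ?M ?R. if wt \<pi>' C then 1 else 0)"
    unfolding cc_def c'[symmetric] by (rule card_filter_sum) (rule cc_finite)
  have s2: "(\<Sum>C\<in>insert ?M ?R. if wt \<pi>' C then 1 else 0) = (if wt \<pi>' ?M then 1 else 0) + (\<Sum>C\<in>?R. if wt \<pi>' C then 1 else (0::nat))"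
    by (rule sum.insert[OF finR MR])
  have s3: "(\<Sum>C\<in>?R. if wt \<pi>' C then 1 else (0::nat)) = (\<Sum>C\<in>?R. if wt \<pi> C then 1 else 0)"
  proof (rule sum.cong[OF refl])
    fix C assume C: "C \<in> ?R"
    then have "wt \<pi>' C = wt \<pi> C" using same[of C] Ri[OF C] by blast
    then show "(if wt \<pi>' C then 1 else (0::nat)) = (if wt \<pi> C then 1 else 0)" by simp
  qed
  have OiR: "?Oi \<notin> insert ?Oj ?R" using ne by blast
  have OjR: "?Oj \<notin> ?R" by blast
  have t1: "cc n \<pi> = (\<Sum>C\<in>insert ?Oi (insert ?Oj ?R). if wt \<pi> C then 1 else 0)"
    unfolding cc_def c[symmetric] by (rule card_filter_sum) (rule cc_finite)
  have t2a: "(\<Sum>C\<in>insert ?Oi (insert ?Oj ?R). if wt \<pi> C then 1 else (0::nat)) = (if wt \<pi> ?Oi then 1 else 0) + (\<Sum>C\<in>insert ?Oj ?R. if wt \<pi> C then 1 else 0)"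
    by (rule sum.insert[OF _ OiR]) (use finR in simp)
  have t2b: "(\<Sum>C\<in>insert ?Oj ?R. if wt \<pi> C then 1 else (0::nat)) = (if wt \<pi> ?Oj then 1 else 0) + (\<Sum>C\<in>?R. if wt \<pi> C then 1 else 0)"
    by (rule sum.insert[OF finR OjR])
  show ?thesis unfolding s1 s2 s3 t1 t2a t2b by simp
qed

lemma swap_image:
  assumes "i \<in> M" "j \<in> M" "M \<subseteq> {1..n}"
  shows "(\<lambda>k. if k \<in> {1..n} then (if k = i then j else if k = j then i else k) else 0) ` M = M"
proof
  let ?t = "\<lambda>k. if k \<in> {1..n} then (if k = i then j else if k = j then i else k) else 0"
  show "?t ` M \<subseteq> M" using assms by auto
  show "M \<subseteq> ?t ` M"
  proof
    fix k assume k: "k \<in> M"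
    then have kn: "k \<in> {1..n}" using assms by blast
    have in1: "i \<in> {1..n}" "j \<in> {1..n}" using assms by blast+
    show "k \<in> ?t ` M"
    proof (cases "k = i")
      case True then show ?thesis using assms in1 by (intro image_eqI[of _ _ j]) auto
    next
      case False
      show ?thesis
      proof (cases "k = j")
        case True then show ?thesis using assms in1 by (intro image_eqI[of _ _ i]) auto
      next
        case F2: False then show ?thesis using False k kn by (intro image_eqI[of _ _ k]) auto
      qed
    qed
  qed
qed



lemma lower_step:
  assumes \<pi>: "\<pi> \<in> signed_perms n" and g: "g \<in> TD n"
  shows "cc n \<pi> \<le> cc n (sp_mult n \<pi> g) + 1"
proof -
  let ?f = "sp_abs \<pi>"
  let ?\<pi>' = "sp_mult n \<pi> g"
  have f: "bij_betw ?f {1..n} {1..n}" "finite {1..n}" using SP_bij[OF \<pi>] by auto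
  have gS: "g \<in> signed_perms n" using TD_SP[OF g] .
  have \<pi>': "?\<pi>' \<in> signed_perms n" using mult_SP[OF \<pi> gS] .
  consider (sw) i j where "1 \<le> i" "i < j" "j \<le> n" "g = tD_pos n i j \<or> g = tD_neg n i j"
    | (bar) i where "1 < i" "i \<le> n" "g = tD_bar n i"
    using g unfolding TD_def by blast
  then show ?thesis
  proof cases
    case sw
    have ab: "sp_abs ?\<pi>' = sw ?f i j" using mult_swap_abs[OF \<pi> sw] .
    have ij: "i \<in> {1..n}" "j \<in> {1..n}" using sw by auto
    have val: "?\<pi>' k = \<pi> k" if "k \<noteq> i" "k \<noteq> j" for k using mult_swap_val[OF \<pi> sw that] .
    show ?thesis
    proof (cases "j \<in> orb ?f i")
      case True
      show ?thesis
      proof (rule sub_count[of n \<pi> "orb ?f i"], rule subsetI)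
        fix C assume C: "C \<in> {C \<in> cls {1..n} (sp_abs \<pi>). wt \<pi> C} - {orb ?f i}"
        then have *: "C \<in> cls {1..n} (sw ?f i j) \<and> i \<notin> C \<and> j \<notin> C" using cls_split[OF f ij True] by auto
        then have "wt ?\<pi>' C = wt \<pi> C" using val by (intro wt_cong) metis
        then show "C \<in> {C \<in> cls {1..n} (sp_abs ?\<pi>'). wt ?\<pi>' C}" using * C ab by auto
      qed
    next
      case False
      let ?M = "orb ?f i \<union> orb ?f j"
      have same: "wt ?\<pi>' C = wt \<pi> C" if "C \<in> cls {1..n} ?f" "i \<notin> C" "j \<notin> C" for C
        using val that by (intro wt_cong) metis
      note mc = merge_count[OF \<pi> ab ij False same]
      have Msub: "?M \<subseteq> {1..n}" using orb_in[OF f(1)] ij by blast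
      have iM: "i \<in> ?M" "j \<in> ?M" using orb_self by auto
      have gim: "sp_abs g ` ?M = ?M"
        using sw(4) swap_image[OF iM Msub] tD_pos_abs tD_neg_abs by metis
      have pg: "par g ?M = 1" using sw(4) tD_pos_par[OF sw(1-3) Msub] tD_neg_par[OF sw(1-3) Msub] iM by auto
      have finO: "finite (orb ?f i)" "finite (orb ?f j)" using orb_in[OF f(1)] ij finite_subset by blast+
      have pM: "par \<pi> ?M = par \<pi> (orb ?f i) * par \<pi> (orb ?f j)"
        unfolding par_def by (rule prod.union_disjoint[OF finO orb_disj[OF f ij False]])
      have "wt ?\<pi>' ?M" if "wt \<pi> (orb ?f i)" "wt \<pi> (orb ?f j)"
      proof (cases "1 \<in> ?M")
        case True then show ?thesis unfolding wt_def by simp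
      next
        case False
        then have "par \<pi> (orb ?f i) = 1" "par \<pi> (orb ?f j) = 1" using that unfolding wt_def by auto
        then show ?thesis using par_mult[OF \<pi> gS Msub gim] pg pM unfolding wt_def by simp
      qed
      then show ?thesis using mc by (auto split: if_splits)
    qed
  next
    case bar
    have ab: "sp_abs ?\<pi>' = ?f" using mult_bar_abs[OF \<pi> bar(1,2)] bar(3) by simp
    have val: "?\<pi>' k = \<pi> k" if "k \<noteq> 1" "k \<noteq> i" for k using mult_bar_val[OF \<pi> bar(1,2) that] bar(3) by simp
    show ?thesis
    proof (rule sub_count[of n \<pi> "orb ?f i"], rule subsetI)
      fix C assume C: "C \<in> {C \<in> cls {1..n} (sp_abs \<pi>). wt \<pi> C} - {orb ?f i}"
      then have i: "i \<notin> C" using cls_avoid[OF f, of C i] by auto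
      have "wt ?\<pi>' C"
      proof (cases "1 \<in> C")
        case True then show ?thesis unfolding wt_def by simp
      next
        case False
        then have "wt ?\<pi>' C = wt \<pi> C" using val i by (intro wt_cong) metis
        then show ?thesis using C by auto
      qed
      then show "C \<in> {C \<in> cls {1..n} (sp_abs ?\<pi>'). wt ?\<pi>' C}" using C ab by auto
    qed
  qed
qed



lemma cc_id: "cc n (sp_id n) = n"
proof -
  let ?f = "sp_abs (sp_id n)"
  have o: "orb ?f x = {x}" if "x \<in> {1..n}" for x
  proof
    show "orb ?f x \<subseteq> {x}" by (rule orb_sub) (use that in \<open>auto simp: sp_id_abs\<close>)
    show "{x} \<subseteq> orb ?f x" using orb_self by auto
  qed
  have c: "cls {1..n} ?f = (\<lambda>x. {x}) ` {1..n}" unfolding cls_def using o by auto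
  have w: "wt (sp_id n) C" if "C \<in> cls {1..n} ?f" for C
    using that sp_id_par[of C n] cls_sub[OF SP_bij[OF sp_id_SP]] unfolding wt_def by blast
  have "cc n (sp_id n) = card ((\<lambda>x. {x}) ` {1..n})" unfolding cc_def using w c by (metis (no_types, lifting) Collect_cong Collect_mem_eq)
  also have "\<dots> = n" by (subst card_image) (auto simp: inj_on_def)
  finally show ?thesis .
qed

lemma foldl_SP: "set ws \<subseteq> TD n \<Longrightarrow> foldl (sp_mult n) (sp_id n) ws \<in> signed_perms n"
proof (induction ws rule: rev_induct)
  case Nil then show ?case by (simp add: sp_id_SP)
next
  case (snoc x xs) then show ?case using mult_SP TD_SP by simp
qed

lemma foldl_Dn: "set ws \<subseteq> TD n \<Longrightarrow> foldl (sp_mult n) (sp_id n) ws \<in> Dn n"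
proof (induction ws rule: rev_induct)
  case Nil then show ?case by (simp add: gens_Dn)
next
  case (snoc x xs)
  have "x \<in> Dn n" using snoc(2) unfolding TD_def by (auto intro: gens_Dn)
  then show ?case using snoc Dn_mult by simp
qed

lemma lower_words: "set ws \<subseteq> TD n \<Longrightarrow> n \<le> cc n (foldl (sp_mult n) (sp_id n) ws) + length ws"
proof (induction ws rule: rev_induct)
  case Nil then show ?case by (simp add: cc_id)
next
  case (snoc x xs)
  have "foldl (sp_mult n) (sp_id n) xs \<in> signed_perms n" using foldl_SP snoc(2) by simp
  then have "cc n (foldl (sp_mult n) (sp_id n) xs) \<le> cc n (sp_mult n (foldl (sp_mult n) (sp_id n) xs) x) + 1"
    using lower_step snoc(2) by simp
  then show ?case using snoc by simp
qed



section \<open>Extension\<close>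

definition ext :: "nat \<Rightarrow> (nat \<Rightarrow> int) \<Rightarrow> nat \<Rightarrow> int" where
  "ext n \<pi> = \<pi>(Suc n := int (Suc n))"

definition restr :: "nat \<Rightarrow> (nat \<Rightarrow> int) \<Rightarrow> nat \<Rightarrow> int" where
  "restr n \<pi> = \<pi>(Suc n := 0)"

lemma ext_abs: "sp_abs (ext n \<pi>) = (sp_abs \<pi>)(Suc n := Suc n)"
  by (auto simp: sp_abs_def ext_def fun_eq_iff)

lemma ext_SP:
  assumes \<pi>: "\<pi> \<in> signed_perms n"
  shows "ext n \<pi> \<in> signed_perms (Suc n)"
proof (rule SP_intro)
  have "bij_betw ((sp_abs \<pi>)(Suc n := Suc n)) {1..n} {1..n}"
    using SP_bij[OF \<pi>] by (rule bij_betw_cong[THEN iffD1, rotated]) auto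
  moreover have "bij_betw ((sp_abs \<pi>)(Suc n := Suc n)) {Suc n} {Suc n}" by simp
  ultimately have "bij_betw ((sp_abs \<pi>)(Suc n := Suc n)) ({1..n} \<union> {Suc n}) ({1..n} \<union> {Suc n})"
    by (rule bij_betw_combine) auto
  moreover have "{1..n} \<union> {Suc n} = {1..Suc n}" by auto
  ultimately show "bij_betw (sp_abs (ext n \<pi>)) {1..Suc n} {1..Suc n}" unfolding ext_abs by simp
  show "\<And>k. k \<notin> {1..Suc n} \<Longrightarrow> ext n \<pi> k = 0" using SP_zero[OF \<pi>] by (auto simp: ext_def)
qed

lemma ext_par: "C \<subseteq> {1..n} \<Longrightarrow> par (ext n \<pi>) C = par \<pi> C"
  by (rule par_cong) (auto simp: ext_def)

lemma ext_Dn: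
  assumes "\<pi> \<in> Dn n" shows "ext n \<pi> \<in> Dn (Suc n)"
proof -
  have "par (ext n \<pi>) {1..Suc n} = par (ext n \<pi>) {1..n} * sgn (ext n \<pi> (Suc n))"
    unfolding par_def by (simp add: atLeastAtMostSuc_conv mult.commute)
  also have "\<dots> = par \<pi> {1..n}" using ext_par[of "{1..n}" n \<pi>] by (simp add: ext_def)
  finally show ?thesis using assms ext_SP Dn_iff by auto
qed

lemma ext_orb:
  assumes \<pi>: "\<pi> \<in> signed_perms n" and x: "x \<in> {1..n}"
  shows "orb (sp_abs (ext n \<pi>)) x = orb (sp_abs \<pi>) x"
proof (rule orb_cong)
  fix y assume "y \<in> orb (sp_abs \<pi>) x"
  then have "y \<in> {1..n}" using orb_in[OF SP_bij[OF \<pi>] x] by blast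
  then show "sp_abs (ext n \<pi>) y = sp_abs \<pi> y" unfolding ext_abs by simp
qed

lemma ext_orbN: "orb (sp_abs (ext n \<pi>)) (Suc n) = {Suc n}"
proof
  show "orb (sp_abs (ext n \<pi>)) (Suc n) \<subseteq> {Suc n}" by (rule orb_sub) (auto simp: ext_abs)
  show "{Suc n} \<subseteq> orb (sp_abs (ext n \<pi>)) (Suc n)" using orb_self by auto
qed

lemma ext_cls:
  assumes \<pi>: "\<pi> \<in> signed_perms n"
  shows "cls {1..Suc n} (sp_abs (ext n \<pi>)) = insert {Suc n} (cls {1..n} (sp_abs \<pi>))"
proof -
  have e: "{1..Suc n} = insert (Suc n) {1..n}" by auto
  show ?thesis unfolding cls_def e image_insert ext_orbN
    by (intro arg_cong[where f="insert {Suc n}"] image_cong[OF refl]) (rule ext_orb[OF \<pi>])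
qed

lemma N_notin_cls:
  assumes \<pi>: "\<pi> \<in> signed_perms n"
  shows "{Suc n} \<notin> cls {1..n} (sp_abs \<pi>)"
proof
  assume h: "{Suc n} \<in> cls {1..n} (sp_abs \<pi>)"
  have "{Suc n} \<subseteq> {1..n}" by (rule cls_sub[OF SP_bij[OF \<pi>] h])
  then show False by simp
qed

lemma wt_N: "wt (ext n \<pi>) {Suc n}"
  unfolding wt_def par_def by (simp add: ext_def)

lemma cc_ext:
  assumes \<pi>: "\<pi> \<in> signed_perms n"
  shows "cc (Suc n) (ext n \<pi>) = cc n \<pi> + 1"
proof -
  let ?c = "cls {1..n} (sp_abs \<pi>)"
  have w: "wt (ext n \<pi>) C = wt \<pi> C" if "C \<in> ?c" for C
    using ext_par[of C n \<pi>] cls_sub[OF SP_bij[OF \<pi>] that] unfolding wt_def by simp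
  have "{C \<in> cls {1..Suc n} (sp_abs (ext n \<pi>)). wt (ext n \<pi>) C} = insert {Suc n} {C \<in> ?c. wt \<pi> C}"
    unfolding ext_cls[OF \<pi>] using w wt_N by auto
  moreover have "{Suc n} \<notin> {C \<in> ?c. wt \<pi> C}" using N_notin_cls[OF \<pi>] by simp
  moreover have "finite {C \<in> ?c. wt \<pi> C}" using cc_finite by simp
  ultimately show ?thesis unfolding cc_def by simp
qed



definition Gen :: "nat \<Rightarrow> nat \<Rightarrow> nat \<Rightarrow> int" where
  "Gen N r = (if r = 0 then sp_id N else if r = 1 then tD_bar N N
     else if even r then tD_pos N (r div 2) N else tD_neg N (r div 2) N)"

definition ins :: "nat \<Rightarrow> (nat \<Rightarrow> int) \<Rightarrow> nat \<Rightarrow> nat \<Rightarrow> int" where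
  "ins n \<pi> r = sp_mult (Suc n) (ext n \<pi>) (Gen (Suc n) r)"

lemma Gen_cases:
  assumes "1 \<le> n" "r < 2 * Suc n"
  obtains (zero) "r = 0" "Gen (Suc n) r = sp_id (Suc n)"
    | (one) "r = 1" "Gen (Suc n) r = tD_bar (Suc n) (Suc n)"
    | (sw) k where "r = 2 * k \<or> r = 2 * k + 1" "1 \<le> k" "k \<le> n"
        "Gen (Suc n) r = tD_pos (Suc n) k (Suc n) \<or> Gen (Suc n) r = tD_neg (Suc n) k (Suc n)"
proof -
  consider "r = 0" | "r = 1" | "r \<ge> 2" by linarith
  then show ?thesis
  proof cases
    case 1 then show ?thesis using zero by (simp add: Gen_def)
  next
    case 2 then show ?thesis using one by (simp add: Gen_def)
  next
    case 3
    have "r = 2 * (r div 2) \<or> r = 2 * (r div 2) + 1" by presburger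
    moreover have "1 \<le> r div 2" "r div 2 \<le> n" using 3 assms by auto
    moreover have "Gen (Suc n) r = tD_pos (Suc n) (r div 2) (Suc n) \<or> Gen (Suc n) r = tD_neg (Suc n) (r div 2) (Suc n)"
      using 3 by (simp add: Gen_def)
    ultimately show ?thesis using sw by blast
  qed
qed

lemma Gen_Dn: assumes "1 \<le> n" "r < 2 * Suc n" shows "Gen (Suc n) r \<in> Dn (Suc n)"
  using Gen_cases[OF assms]
proof cases
  case 1 then show ?thesis by (simp add: gens_Dn)
next
  case 2 then show ?thesis using assms by (simp add: gens_Dn)
next
  case (3 k)
  then have "k < Suc n" "1 \<le> k" by auto
  then show ?thesis using 3(4) gens_Dn(1,2)[of k "Suc n" "Suc n"] by auto
qed

lemma Gen_TD: assumes "1 \<le> n" "r < 2 * Suc n" "r \<noteq> 0" shows "Gen (Suc n) r \<in> TD (Suc n)"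
  using Gen_cases[OF assms(1,2)]
proof cases
  case 1 then show ?thesis using assms by simp
next
  case 2
  have "1 < Suc n" using assms by simp
  then show ?thesis using 2 unfolding TD_def by blast
next
  case (3 k)
  then have "k < Suc n" "1 \<le> k" by auto
  then show ?thesis using 3(4) unfolding TD_def by blast
qed

lemma mult_id_right: "x \<in> signed_perms N \<Longrightarrow> sp_mult N x (sp_id N) = x"
  by (auto simp: sp_mult_def sp_id_def fun_eq_iff SP_zero)

lemma cc_ins:
  assumes \<pi>: "\<pi> \<in> signed_perms n" and n: "1 \<le> n" and r: "r < 2 * Suc n"
  shows "cc (Suc n) (ins n \<pi> r) = cc n \<pi> + (if r = 0 then 1 else 0)"
proof -
  let ?N = "Suc n"
  let ?E = "ext n \<pi>"
  have E: "?E \<in> signed_perms ?N" using ext_SP[OF \<pi>] .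
  have cE: "cc ?N ?E = cc n \<pi> + 1" using cc_ext[OF \<pi>] .
  have fE: "bij_betw (sp_abs ?E) {1..?N} {1..?N}" "finite {1..?N}" using SP_bij[OF E] by auto
  show ?thesis
  using Gen_cases[OF n r] proof cases
    case 1
    then show ?thesis using cE mult_id_right[OF E] by (simp add: ins_def)
  next
    case 2
    let ?p = "ins n \<pi> r"
    have n1: "1 < ?N" using n by simp
    have p: "?p = sp_mult ?N ?E (tD_bar ?N ?N)" using 2 by (simp add: ins_def)
    have ab: "sp_abs ?p = sp_abs ?E" unfolding p by (rule mult_bar_abs[OF E n1 le_refl])
    have val: "?p k = ?E k" if "k \<noteq> 1" "k \<noteq> ?N" for k unfolding p by (rule mult_bar_val[OF E n1 le_refl that])
    have tb: "tD_bar ?N ?N ?N = - int ?N" using n by (simp add: tD_bar_def)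
    have pN: "?p ?N = - int ?N" unfolding p sp_mult_def tb by (simp add: ext_def del: of_nat_Suc)
    have "{C \<in> cls {1..?N} (sp_abs ?p). wt ?p C} = {C \<in> cls {1..n} (sp_abs \<pi>). wt \<pi> C}"
    proof -
      have "wt ?p C = wt \<pi> C" if "C \<in> cls {1..n} (sp_abs \<pi>)" for C
      proof (cases "1 \<in> C")
        case True then show ?thesis unfolding wt_def by simp
      next
        case False
        have sub: "C \<subseteq> {1..n}" using cls_sub[OF SP_bij[OF \<pi>] that] .
        have "wt ?p C = wt ?E C" by (intro wt_cong, rule val) (use False sub in auto)
        also have "\<dots> = wt \<pi> C" using ext_par[OF sub] unfolding wt_def by simp
        finally show ?thesis .
      qed
      moreover have "\<not> wt ?p {?N}" using pN n unfolding wt_def par_def by simp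
      ultimately show ?thesis unfolding ab ext_cls[OF \<pi>] by auto
    qed
    then show ?thesis unfolding cc_def using 2 by simp
  next
    case (3 k)
    let ?p = "ins n \<pi> r"
    let ?g = "Gen ?N r"
    have swc: "1 \<le> k" "k < ?N" "?N \<le> ?N" "?g = tD_pos ?N k ?N \<or> ?g = tD_neg ?N k ?N" using 3 by auto
    have p: "?p = sp_mult ?N ?E ?g" by (simp add: ins_def)
    have ab: "sp_abs ?p = sw (sp_abs ?E) k ?N" unfolding p by (rule mult_swap_abs[OF E swc])
    have val: "?p j = ?E j" if "j \<noteq> k" "j \<noteq> ?N" for j unfolding p by (rule mult_swap_val[OF E swc that])
    have kN: "k \<in> {1..?N}" "?N \<in> {1..?N}" using 3 by auto
    have Ok: "orb (sp_abs ?E) k = orb (sp_abs \<pi>) k" using ext_orb[OF \<pi>] 3 by simp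
    have Oksub: "orb (sp_abs \<pi>) k \<subseteq> {1..n}" using orb_in[OF SP_bij[OF \<pi>]] 3 by simp
    have Nk: "?N \<notin> orb (sp_abs ?E) k" using Ok Oksub by auto
    have same: "wt ?p C = wt ?E C" if "C \<in> cls {1..?N} (sp_abs ?E)" "k \<notin> C" "?N \<notin> C" for C
      using val that by (intro wt_cong) metis
    note mc = merge_count[OF E ab kN Nk same]
    let ?M = "orb (sp_abs ?E) k \<union> orb (sp_abs ?E) ?N"
    have ON: "orb (sp_abs ?E) ?N = {?N}" by (rule ext_orbN)
    have Msub: "?M \<subseteq> {1..?N}" using Ok Oksub ON by auto
    have iM: "k \<in> ?M" "?N \<in> ?M" using orb_self by auto
    have gS: "?g \<in> signed_perms ?N" using swc(4) tD_pos_SP[OF swc(1-3)] tD_neg_SP[OF swc(1-3)] by metis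
    have gim: "sp_abs ?g ` ?M = ?M"
      using swc(4) swap_image[OF iM Msub] tD_pos_abs tD_neg_abs by metis
    have pg: "par ?g ?M = 1" using swc(4) tD_pos_par[OF swc(1-3) Msub] tD_neg_par[OF swc(1-3) Msub] iM by auto
    have finO: "finite (orb (sp_abs ?E) k)" "finite (orb (sp_abs ?E) ?N)" using ON Ok finite_subset[OF Oksub] by auto
    have pM: "par ?E ?M = par ?E (orb (sp_abs ?E) k) * par ?E (orb (sp_abs ?E) ?N)"
      unfolding par_def by (rule prod.union_disjoint[OF finO orb_disj[OF fE kN Nk]])
    have pN: "par ?E (orb (sp_abs ?E) ?N) = 1" using ON by (simp add: par_def ext_def)
    have "par ?p ?M = par ?E (orb (sp_abs ?E) k)"
      unfolding p par_mult[OF E gS Msub gim] pg pM pN by simp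
    moreover have "1 \<in> ?M \<longleftrightarrow> 1 \<in> orb (sp_abs ?E) k" using ON n by auto
    ultimately have "wt ?p ?M = wt ?E (orb (sp_abs ?E) k)" unfolding wt_def by simp
    moreover have "wt ?E (orb (sp_abs ?E) ?N)" using ON wt_N by simp
    ultimately show ?thesis using mc cE 3 by (auto split: if_splits)
  qed
qed



lemma mult_pos_val: "k \<in> {1..N} \<Longrightarrow> 1 \<le> i \<Longrightarrow> i < j \<Longrightarrow> j \<le> N \<Longrightarrow>
  sp_mult N x (tD_pos N i j) k = (if k = i then x j else if k = j then x i else x k)"
  unfolding sp_mult_def tD_pos_def by (cases "k = i"; cases "k = j") auto

lemma mult_neg_val: "k \<in> {1..N} \<Longrightarrow> 1 \<le> i \<Longrightarrow> i < j \<Longrightarrow> j \<le> N \<Longrightarrow>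
  sp_mult N x (tD_neg N i j) k = (if k = i then - x j else if k = j then - x i else x k)"
  unfolding sp_mult_def tD_neg_def by (cases "k = i"; cases "k = j") auto

lemma mult_bar_val2: "k \<in> {1..N} \<Longrightarrow> 1 < i \<Longrightarrow> i \<le> N \<Longrightarrow>
  sp_mult N x (tD_bar N i) k = (if k = 1 \<or> k = i then - x k else x k)"
  unfolding sp_mult_def tD_bar_def by (cases "k = 1"; cases "k = i") auto

lemma mult_out: "k \<notin> {1..N} \<Longrightarrow> sp_mult N x g k = 0"
  unfolding sp_mult_def by (simp only: if_False)

lemma inv_pos:
  assumes "x \<in> signed_perms N" "1 \<le> i" "i < j" "j \<le> N"
  shows "sp_mult N (sp_mult N x (tD_pos N i j)) (tD_pos N i j) = x"
proof
  fix k show "sp_mult N (sp_mult N x (tD_pos N i j)) (tD_pos N i j) k = x k"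
  proof (cases "k \<in> {1..N}")
    case True
    have ij: "i \<in> {1..N}" "j \<in> {1..N}" using assms by auto
    show ?thesis using True ij assms(2-4) by (simp add: mult_pos_val)
  next
    case False then show ?thesis using mult_out SP_zero[OF assms(1)] by metis
  qed
qed

lemma inv_neg:
  assumes "x \<in> signed_perms N" "1 \<le> i" "i < j" "j \<le> N"
  shows "sp_mult N (sp_mult N x (tD_neg N i j)) (tD_neg N i j) = x"
proof
  fix k show "sp_mult N (sp_mult N x (tD_neg N i j)) (tD_neg N i j) k = x k"
  proof (cases "k \<in> {1..N}")
    case True
    have ij: "i \<in> {1..N}" "j \<in> {1..N}" using assms by auto
    show ?thesis using True ij assms(2-4) by (simp add: mult_neg_val)
  next
    case False then show ?thesis using mult_out SP_zero[OF assms(1)] by metis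
  qed
qed

lemma inv_bar:
  assumes "x \<in> signed_perms N" "1 < i" "i \<le> N"
  shows "sp_mult N (sp_mult N x (tD_bar N i)) (tD_bar N i) = x"
proof
  fix k show "sp_mult N (sp_mult N x (tD_bar N i)) (tD_bar N i) k = x k"
  proof (cases "k \<in> {1..N}")
    case True
    show ?thesis using True assms(2-3) by (simp add: mult_bar_val2)
  next
    case False then show ?thesis using mult_out SP_zero[OF assms(1)] by metis
  qed
qed

lemma inv_Gen:
  assumes "x \<in> signed_perms (Suc n)" "1 \<le> n" "r < 2 * Suc n"
  shows "sp_mult (Suc n) (sp_mult (Suc n) x (Gen (Suc n) r)) (Gen (Suc n) r) = x"
  using Gen_cases[OF assms(2,3)]
proof cases
  case 1 then show ?thesis using mult_id_right[OF assms(1)] by simp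
next
  case 2 then show ?thesis using inv_bar[OF assms(1)] assms(2) by simp
next
  case (3 k)
  then have "1 \<le> k" "k < Suc n" by auto
  then show ?thesis using 3(4) inv_pos[OF assms(1)] inv_neg[OF assms(1)] by auto
qed



definition opt :: "nat \<Rightarrow> (nat \<Rightarrow> int) \<Rightarrow> nat" where
  "opt N x = (if x N = int N then 0 else if x N = - int N then 1 else
    (let k = (THE k. k \<in> {1..N} \<and> sp_abs x k = N) in if x k > 0 then 2*k else 2*k+1))"

lemma the_pos:
  assumes x: "x \<in> signed_perms N" and k: "k \<in> {1..N}" "sp_abs x k = N"
  shows "(THE k. k \<in> {1..N} \<and> sp_abs x k = N) = k"
proof (rule the_equality)
  show "k \<in> {1..N} \<and> sp_abs x k = N" using k by simp
  fix k' assume "k' \<in> {1..N} \<and> sp_abs x k' = N"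
  then show "k' = k" using k bij_betw_imp_inj_on[OF SP_bij[OF x]] unfolding inj_on_def by metis
qed

lemma Gen_even: "1 \<le> k \<Longrightarrow> Gen N (2*k) = tD_pos N k N"
  by (simp add: Gen_def)

lemma Gen_odd: "1 \<le> k \<Longrightarrow> Gen N (2*k+1) = tD_neg N k N"
  by (simp add: Gen_def)

lemma opt_ins:
  assumes \<pi>: "\<pi> \<in> signed_perms n" and n: "1 \<le> n" and r: "r < 2 * Suc n"
  shows "opt (Suc n) (ins n \<pi> r) = r"
proof -
  let ?N = "Suc n"
  let ?E = "ext n \<pi>"
  let ?p = "ins n \<pi> r"
  have E: "?E \<in> signed_perms ?N" using ext_SP[OF \<pi>] .
  have pS: "?p \<in> signed_perms ?N" unfolding ins_def using mult_SP[OF E] Gen_Dn[OF n r] Dn_iff by blast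
  show ?thesis
    using Gen_cases[OF n r]
  proof cases
    case 1 then show ?thesis using mult_id_right[OF E] by (simp add: ins_def opt_def ext_def)
  next
    case 2
    have tb: "tD_bar ?N ?N ?N = - int ?N" using n by (simp add: tD_bar_def)
    have pN: "?p ?N = - int ?N" unfolding ins_def 2(2) sp_mult_def tb by (simp add: ext_def del: of_nat_Suc)
    then show ?thesis using 2 by (simp add: opt_def del: of_nat_Suc)
  next
    case (3 k)
    have kr: "k \<in> {1..?N}" "k \<noteq> ?N" "1 \<le> k" "k < ?N" using 3 by auto
    have Nr: "?N \<in> {1..?N}" by simp
    have pik: "sp_abs \<pi> k \<in> {1..n}" using SP_range[OF \<pi>] 3 by simp
    have Ek: "?E k = \<pi> k" "?E ?N = int ?N" using kr by (auto simp: ext_def)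
    from 3(1) show ?thesis
    proof
      assume r2: "r = 2 * k"
      have g: "Gen ?N r = tD_pos ?N k ?N" using r2 Gen_even kr by simp
      have pk: "?p k = int ?N" unfolding ins_def g using mult_pos_val[OF kr(1) kr(3,4) le_refl] Ek by simp
      have pN: "?p ?N = \<pi> k" unfolding ins_def g using mult_pos_val[OF Nr kr(3,4) le_refl] Ek kr by simp
      have "\<pi> k \<noteq> int ?N" "\<pi> k \<noteq> - int ?N" using pik by (auto simp: sp_abs_def)
      moreover have "(THE k. k \<in> {1..?N} \<and> sp_abs ?p k = ?N) = k"
        by (rule the_pos[OF pS kr(1)]) (simp add: pk sp_abs_def)
      ultimately show ?thesis using pk pN r2 unfolding opt_def Let_def by simp
    next
      assume r2: "r = 2 * k + 1"
      have g: "Gen ?N r = tD_neg ?N k ?N" using r2 Gen_odd kr by simp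
      have pk: "?p k = - int ?N" unfolding ins_def g using mult_neg_val[OF kr(1) kr(3,4) le_refl] Ek by simp
      have pN: "?p ?N = - \<pi> k" unfolding ins_def g using mult_neg_val[OF Nr kr(3,4) le_refl] Ek kr by simp
      have "\<pi> k \<noteq> int ?N" "\<pi> k \<noteq> - int ?N" using pik by (auto simp: sp_abs_def)
      moreover have "(THE k. k \<in> {1..?N} \<and> sp_abs ?p k = ?N) = k"
        by (rule the_pos[OF pS kr(1)]) (simp add: pk sp_abs_def)
      ultimately show ?thesis using pk pN r2 unfolding opt_def Let_def by simp
    qed
  qed
qed

lemma restr_ins:
  assumes \<pi>: "\<pi> \<in> signed_perms n" and n: "1 \<le> n" and r: "r < 2 * Suc n"
  shows "restr n (sp_mult (Suc n) (ins n \<pi> r) (Gen (Suc n) r)) = \<pi>"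
proof -
  have "sp_mult (Suc n) (ins n \<pi> r) (Gen (Suc n) r) = ext n \<pi>"
    unfolding ins_def by (rule inv_Gen[OF ext_SP[OF \<pi>] n r])
  moreover have "\<pi> (Suc n) = 0" using SP_zero[OF \<pi>] by simp
  ultimately show ?thesis by (auto simp: restr_def ext_def fun_eq_iff)
qed



lemma nat_abs_eq: "nat \<bar>z\<bar> = m \<Longrightarrow> 0 < m \<Longrightarrow> z = int m \<or> z = - int m" by arith

lemma opt_props:
  assumes x: "x \<in> signed_perms (Suc n)" and n: "1 \<le> n"
  shows "opt (Suc n) x < 2 * Suc n \<and> sp_mult (Suc n) x (Gen (Suc n) (opt (Suc n) x)) (Suc n) = int (Suc n)"
proof -
  let ?N = "Suc n"
  have Nr: "?N \<in> {1..?N}" by simp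
  consider "x ?N = int ?N" | "x ?N = - int ?N" | "x ?N \<noteq> int ?N" "x ?N \<noteq> - int ?N" by blast
  then show ?thesis
  proof cases
    case 1 then show ?thesis using mult_id_right[OF x] by (simp add: opt_def Gen_def)
  next
    case 2
    have o: "opt ?N x = 1" using 2 by (simp add: opt_def del: of_nat_Suc)
    have "sp_mult ?N x (tD_bar ?N ?N) ?N = - x ?N" using mult_bar_val2[OF Nr] n by simp
    then show ?thesis using o 2 by (simp add: Gen_def)
  next
    case 3
    have "?N \<in> sp_abs x ` {1..?N}" unfolding bij_betw_imp_surj_on[OF SP_bij[OF x]] by (rule Nr)
    then obtain k where k: "k \<in> {1..?N}" "sp_abs x k = ?N" by (rule imageE) (rule that, assumption, rule sym)
    have kN: "k \<noteq> ?N"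
    proof
      assume "k = ?N"
      then have "nat \<bar>x ?N\<bar> = ?N" using k(2) unfolding sp_abs_def by (simp only:)
      moreover have "0 < ?N" by (rule zero_less_Suc)
      ultimately have "x ?N = int ?N \<or> x ?N = - int ?N" by (rule nat_abs_eq)
      then show False using 3 by (simp only: simp_thms)
    qed
    have kr: "1 \<le> k" "k < ?N" using k kN by (auto simp del: of_nat_Suc)
    have the: "(THE k. k \<in> {1..?N} \<and> sp_abs x k = ?N) = k" using the_pos[OF x k] .
    have xk: "x k = int ?N \<or> x k = - int ?N" using k(2) nat_abs_eq[of "x k" ?N] unfolding sp_abs_def by blast
    show ?thesis
    proof (cases "x k > 0")
      case True
      then have xk': "x k = int ?N" using xk by auto
      have o: "opt ?N x = 2 * k" using 3 the True unfolding opt_def Let_def by simp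
      have "Gen ?N (2*k) = tD_pos ?N k ?N" using Gen_even kr by simp
      moreover have "sp_mult ?N x (tD_pos ?N k ?N) ?N = x k" using mult_pos_val[OF Nr kr le_refl] kN by simp
      ultimately show ?thesis using o xk' kr by simp
    next
      case False
      then have xk': "x k = - int ?N" using xk by auto
      have o: "opt ?N x = 2 * k + 1" using 3 the False unfolding opt_def Let_def by simp
      have "Gen ?N (2*k+1) = tD_neg ?N k ?N" using Gen_odd kr by simp
      moreover have "sp_mult ?N x (tD_neg ?N k ?N) ?N = - x k" using mult_neg_val[OF Nr kr le_refl] kN by simp
      ultimately show ?thesis using o xk' kr by simp
    qed
  qed
qed

lemma restr_Dn:
  assumes y: "y \<in> Dn (Suc n)" and yN: "y (Suc n) = int (Suc n)"
  shows "restr n y \<in> Dn n" "ext n (restr n y) = y"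
proof -
  let ?N = "Suc n"
  have yS: "y \<in> signed_perms ?N" using y Dn_iff by auto
  have f: "bij_betw (sp_abs y) {1..?N} {1..?N}" using SP_bij[OF yS] .
  have fN: "sp_abs y ?N = ?N" using yN by (simp add: sp_abs_def)
  have img: "sp_abs y ` {1..n} = {1..n}"
  proof -
    have e: "{1..n} = {1..?N} - {?N}" by auto
    have "sp_abs y ` ({1..?N} - {?N}) = sp_abs y ` {1..?N} - sp_abs y ` {?N}"
      by (rule inj_on_image_set_diff[OF bij_betw_imp_inj_on[OF f]]) auto
    then show ?thesis unfolding e using bij_betw_imp_surj_on[OF f] fN by simp
  qed
  have bs: "bij_betw (sp_abs y) {1..n} {1..n}" by (rule bij_betw_subset[OF f _ img]) auto
  have eqp: "sp_abs y a = sp_abs (restr n y) a" if "a \<in> {1..n}" for a using that by (simp add: sp_abs_def restr_def)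
  have b: "bij_betw (sp_abs (restr n y)) {1..n} {1..n}"
    using bij_betw_cong[of "{1..n}" "sp_abs y" "sp_abs (restr n y)" "{1..n}", OF eqp] bs by blast
  have rS: "restr n y \<in> signed_perms n"
  proof (rule SP_intro[OF b])
    fix k assume "k \<notin> {1..n}"
    then show "restr n y k = 0" using SP_zero[OF yS, of k] by (cases "k = ?N") (auto simp: restr_def)
  qed
  have "par y {1..?N} = par y {1..n} * sgn (y ?N)"
    unfolding par_def by (simp add: atLeastAtMostSuc_conv mult.commute)
  then have "par y {1..n} = 1" using y Dn_iff yN by simp
  moreover have "par (restr n y) {1..n} = par y {1..n}" by (rule par_cong) (auto simp: restr_def)
  ultimately show "restr n y \<in> Dn n" using rS Dn_iff by simp
  show "ext n (restr n y) = y" using yN by (auto simp: ext_def restr_def fun_eq_iff)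
qed

lemma ins_bij:
  assumes n: "1 \<le> n"
  shows "bij_betw (\<lambda>(\<pi>, r). ins n \<pi> r) (Dn n \<times> {..<2 * Suc n}) (Dn (Suc n))"
proof (rule bij_betw_imageI)
  show "inj_on (\<lambda>(\<pi>, r). ins n \<pi> r) (Dn n \<times> {..<2 * Suc n})"
  proof (rule inj_onI, clarify)
    fix \<pi>1 r1 \<pi>2 r2
    assume a: "\<pi>1 \<in> Dn n" "r1 < 2 * Suc n" "\<pi>2 \<in> Dn n" "r2 < 2 * Suc n" "ins n \<pi>1 r1 = ins n \<pi>2 r2"
    have s: "\<pi>1 \<in> signed_perms n" "\<pi>2 \<in> signed_perms n" using a Dn_iff by auto
    have r: "r1 = r2" using opt_ins[OF s(1) n a(2)] opt_ins[OF s(2) n a(4)] a(5) by metis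
    have "\<pi>1 = \<pi>2" using restr_ins[OF s(1) n a(2)] restr_ins[OF s(2) n a(4)] a(5) r by metis
    then show "\<pi>1 = \<pi>2 \<and> r1 = r2" using r by simp
  qed
  show "(\<lambda>(\<pi>, r). ins n \<pi> r) ` (Dn n \<times> {..<2 * Suc n}) = Dn (Suc n)"
  proof
    show "(\<lambda>(\<pi>, r). ins n \<pi> r) ` (Dn n \<times> {..<2 * Suc n}) \<subseteq> Dn (Suc n)"
    proof (rule image_subsetI)
      fix p assume p: "p \<in> Dn n \<times> {..<2 * Suc n}"
      obtain \<pi> r where pr: "p = (\<pi>, r)" by (cases p)
      have a: "\<pi> \<in> Dn n" "r < 2 * Suc n" using p pr by auto
      have "ins n \<pi> r \<in> Dn (Suc n)" unfolding ins_def by (rule Dn_mult[OF ext_Dn[OF a(1)] Gen_Dn[OF n a(2)]])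
      then show "(\<lambda>(\<pi>, r). ins n \<pi> r) p \<in> Dn (Suc n)" using pr by simp
    qed
    show "Dn (Suc n) \<subseteq> (\<lambda>(\<pi>, r). ins n \<pi> r) ` (Dn n \<times> {..<2 * Suc n})"
    proof
      fix x assume x: "x \<in> Dn (Suc n)"
      have xS: "x \<in> signed_perms (Suc n)" using x Dn_iff by auto
      define r where "r = opt (Suc n) x"
      define y where "y = sp_mult (Suc n) x (Gen (Suc n) r)"
      have r: "r < 2 * Suc n" and yN: "y (Suc n) = int (Suc n)" using opt_props[OF xS n] unfolding r_def y_def by auto
      have yD: "y \<in> Dn (Suc n)" unfolding y_def using Dn_mult[OF x Gen_Dn[OF n r]] .
      note R = restr_Dn[OF yD yN]
      have eq: "ins n (restr n y) r = x"
        unfolding ins_def R(2) unfolding y_def by (rule inv_Gen[OF xS n r])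
      have mem: "(restr n y, r) \<in> Dn n \<times> {..<2 * Suc n}" using R(1) r by simp
      show "x \<in> (\<lambda>(\<pi>, r). ins n \<pi> r) ` (Dn n \<times> {..<2 * Suc n})"
        by (rule image_eqI[OF _ mem]) (simp add: eq)
    qed
  qed
qed



lemma cc_le: "cc n \<pi> \<le> n"
proof -
  have "cc n \<pi> \<le> card (cls {1..n} (sp_abs \<pi>))" unfolding cc_def by (rule card_mono[OF cc_finite]) auto
  also have "\<dots> \<le> card {1..n}" unfolding cls_def by (rule card_image_le) simp
  finally show ?thesis by simp
qed

lemma Dn_one: "Dn 1 = {sp_id 1}"
proof
  show "{sp_id 1} \<subseteq> Dn 1" using gens_Dn(4) by simp
  show "Dn 1 \<subseteq> {sp_id 1}"
  proof
    fix \<pi> assume p: "\<pi> \<in> Dn 1"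
    then have s: "\<pi> \<in> signed_perms 1" and par: "par \<pi> {1..1} = 1" using Dn_iff by auto
    have "sp_abs \<pi> 1 \<in> {1..1}" using SP_range[OF s] by simp
    then have "nat \<bar>\<pi> 1\<bar> = 1" unfolding sp_abs_def by simp
    then have "\<pi> 1 = int 1 \<or> \<pi> 1 = - int 1" using nat_abs_eq[of "\<pi> 1" 1] by simp
    then have "\<pi> 1 = 1 \<or> \<pi> 1 = -1" by simp
    moreover have "sgn (\<pi> 1) = 1" using par by (simp add: par_def)
    ultimately have "\<pi> 1 = 1" by auto
    then have "\<pi> = sp_id 1" using SP_zero[OF s] by (auto simp: sp_id_def fun_eq_iff)
    then show "\<pi> \<in> {sp_id 1}" by simp
  qed
qed

lemma sum_step:
  fixes a b :: "'a :: comm_ring_1"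
  assumes n: "1 \<le> n"
  shows "(\<Sum>\<pi>\<in>Dn (Suc n). a ^ cc (Suc n) \<pi> * b ^ (Suc n - cc (Suc n) \<pi>))
       = (a + of_nat (2 * Suc n - 1) * b) * (\<Sum>\<pi>\<in>Dn n. a ^ cc n \<pi> * b ^ (n - cc n \<pi>))"
proof -
  let ?F = "\<lambda>\<pi>. a ^ cc (Suc n) \<pi> * b ^ (Suc n - cc (Suc n) \<pi>)"
  have "(\<Sum>\<pi>\<in>Dn (Suc n). ?F \<pi>) = (\<Sum>p\<in>Dn n \<times> {..<2 * Suc n}. ?F ((\<lambda>(\<pi>, r). ins n \<pi> r) p))"
    by (rule sum.reindex_bij_betw[OF ins_bij[OF n], symmetric])
  also have "\<dots> = (\<Sum>\<pi>\<in>Dn n. \<Sum>r<2 * Suc n. ?F (ins n \<pi> r))"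
    by (subst sum.cartesian_product) (rule sum.cong, auto)
  also have "\<dots> = (\<Sum>\<pi>\<in>Dn n. (a + of_nat (2 * Suc n - 1) * b) * (a ^ cc n \<pi> * b ^ (n - cc n \<pi>)))"
  proof (rule sum.cong[OF refl])
    fix \<pi> assume p: "\<pi> \<in> Dn n"
    then have s: "\<pi> \<in> signed_perms n" using Dn_iff by auto
    define c where "c = cc n \<pi>"
    have cn: "c \<le> n" unfolding c_def by (rule cc_le)
    have "(\<Sum>r<2 * Suc n. ?F (ins n \<pi> r)) = (\<Sum>r<Suc (2 * n + 1). ?F (ins n \<pi> r))" by simp
    also have "\<dots> = ?F (ins n \<pi> 0) + (\<Sum>r<2 * n + 1. ?F (ins n \<pi> (Suc r)))"
      by (rule sum.lessThan_Suc_shift)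
    also have "?F (ins n \<pi> 0) = a ^ (c + 1) * b ^ (n - c)"
      using cc_ins[OF s n, of 0] cn by (simp add: c_def)
    also have "(\<Sum>r<2 * n + 1. ?F (ins n \<pi> (Suc r))) = (\<Sum>r<2 * n + 1. a ^ c * b ^ (Suc (n - c)))"
    proof (rule sum.cong[OF refl])
      fix r assume "r \<in> {..<2 * n + 1}"
      then have "Suc r < 2 * Suc n" by simp
      then show "?F (ins n \<pi> (Suc r)) = a ^ c * b ^ (Suc (n - c))"
        using cc_ins[OF s n, of "Suc r"] cn by (simp add: c_def Suc_diff_le)
    qed
    also have "\<dots> = of_nat (2 * n + 1) * (a ^ c * b ^ (Suc (n - c)))" by simp
    also have "a ^ (c + 1) * b ^ (n - c) + of_nat (2 * n + 1) * (a ^ c * b ^ (Suc (n - c)))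
        = (a + of_nat (2 * Suc n - 1) * b) * (a ^ c * b ^ (n - c))"
      by (simp add: algebra_simps)
    finally show "(\<Sum>r<2 * Suc n. ?F (ins n \<pi> r)) = (a + of_nat (2 * Suc n - 1) * b) * (a ^ cc n \<pi> * b ^ (n - cc n \<pi>))"
      unfolding c_def .
  qed
  also have "\<dots> = (a + of_nat (2 * Suc n - 1) * b) * (\<Sum>\<pi>\<in>Dn n. a ^ cc n \<pi> * b ^ (n - cc n \<pi>))"
    by (simp add: sum_distrib_left)
  finally show ?thesis .
qed

lemma gen_fun:
  fixes a b :: "'a :: comm_ring_1"
  assumes n: "1 \<le> n"
  shows "(\<Sum>\<pi>\<in>Dn n. a ^ cc n \<pi> * b ^ (n - cc n \<pi>)) = a * (\<Prod>i=2..n. a + of_nat (2 * i - 1) * b)"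
  using n
proof (induction n rule: nat_induct_at_least)
  case base
  have "Dn (Suc 0) = {sp_id (Suc 0)}" using Dn_one by simp
  moreover have "cc (Suc 0) (sp_id (Suc 0)) = 1" using cc_id[of 1] by simp
  ultimately show ?case by simp
next
  case (Suc n)
  have pe: "(\<Prod>i=2..Suc n. a + of_nat (2 * i - 1) * b) = (\<Prod>i=2..n. a + of_nat (2 * i - 1) * b) * (a + of_nat (2 * Suc n - 1) * b)"
    using Suc(1) by (simp add: prod.cl_ivl_Suc)
  show ?case unfolding sum_step[OF Suc(1), of a b] Suc(2) pe by (simp only: mult_ac)
qed



lemma ext_pos: "i < j \<Longrightarrow> j \<le> n \<Longrightarrow> ext n (tD_pos n i j) = tD_pos (Suc n) i j"
  unfolding ext_def tD_pos_def fun_eq_iff by auto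

lemma ext_neg: "i < j \<Longrightarrow> j \<le> n \<Longrightarrow> ext n (tD_neg n i j) = tD_neg (Suc n) i j"
  unfolding ext_def tD_neg_def fun_eq_iff by auto

lemma ext_bar: "1 < i \<Longrightarrow> i \<le> n \<Longrightarrow> ext n (tD_bar n i) = tD_bar (Suc n) i"
  unfolding ext_def tD_bar_def fun_eq_iff by auto

lemma ext_id: "ext n (sp_id n) = sp_id (Suc n)"
  unfolding ext_def sp_id_def fun_eq_iff by auto

lemma ext_TD: "g \<in> TD n \<Longrightarrow> ext n g \<in> TD (Suc n)"
proof -
  assume "g \<in> TD n"
  then consider (p) i j where "1 \<le> i" "i < j" "j \<le> n" "g = tD_pos n i j"
    | (q) i j where "1 \<le> i" "i < j" "j \<le> n" "g = tD_neg n i j"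
    | (b) i where "1 < i" "i \<le> n" "g = tD_bar n i"
    unfolding TD_def by blast
  then show ?thesis
  proof cases
    case p
    then have "ext n g = tD_pos (Suc n) i j" using ext_pos by simp
    moreover have "j \<le> Suc n" using p by simp
    ultimately show ?thesis using p unfolding TD_def by blast
  next
    case q
    then have "ext n g = tD_neg (Suc n) i j" using ext_neg by simp
    moreover have "j \<le> Suc n" using q by simp
    ultimately show ?thesis using q unfolding TD_def by blast
  next
    case b
    then have "ext n g = tD_bar (Suc n) i" using ext_bar by simp
    moreover have "i \<le> Suc n" using b by simp
    ultimately show ?thesis using b unfolding TD_def by blast
  qed
qed

lemma ext_mult:
  assumes g: "g \<in> signed_perms n"
  shows "ext n (sp_mult n a g) = sp_mult (Suc n) (ext n a) (ext n g)"
proof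
  fix k
  show "ext n (sp_mult n a g) k = sp_mult (Suc n) (ext n a) (ext n g) k"
  proof (cases "k \<in> {1..n}")
    case True
    have r: "sp_abs g k \<in> {1..n}" using SP_range[OF g True] .
    then have "nat \<bar>g k\<bar> \<noteq> Suc n" unfolding sp_abs_def by auto
    then show ?thesis using True unfolding ext_def sp_mult_def by auto
  next
    case False
    show ?thesis
    proof (cases "k = Suc n")
      case True then show ?thesis unfolding ext_def sp_mult_def by (simp del: of_nat_Suc)
    next
      case F2: False
      then have "k \<notin> {1..Suc n}" using False by auto
      then have "sp_mult (Suc n) (ext n a) (ext n g) k = 0" by (rule mult_out)
      moreover have "sp_mult n a g k = 0" using False by (rule mult_out)
      ultimately show ?thesis using F2 unfolding ext_def by simp
    qed
  qed
qed

lemma foldl_ext: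
  "set ws \<subseteq> TD n \<Longrightarrow> foldl (sp_mult (Suc n)) (sp_id (Suc n)) (map (ext n) ws) = ext n (foldl (sp_mult n) (sp_id n) ws)"
proof (induction ws rule: rev_induct)
  case Nil then show ?case by (simp add: ext_id)
next
  case (snoc x xs)
  then have "x \<in> signed_perms n" using TD_SP by simp
  then show ?case using snoc by (simp add: ext_mult)
qed

lemma upper:
  assumes "1 \<le> n" "\<pi> \<in> Dn n"
  shows "\<exists>ws. set ws \<subseteq> TD n \<and> foldl (sp_mult n) (sp_id n) ws = \<pi> \<and> length ws = n - cc n \<pi>"
  using assms
proof (induction n arbitrary: \<pi> rule: nat_induct_at_least)
  case base
  then have "\<pi> = sp_id 1" using Dn_one by simp
  then show ?case using cc_id[of 1] by (intro exI[of _ "[]"]) simp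
next
  case (Suc n)
  have "\<pi> \<in> (\<lambda>(\<pi>, r). ins n \<pi> r) ` (Dn n \<times> {..<2 * Suc n})"
    using bij_betw_imp_surj_on[OF ins_bij[OF Suc(1)]] Suc(3) by simp
  then obtain \<pi>' r where p: "\<pi>' \<in> Dn n" "r < 2 * Suc n" "\<pi> = ins n \<pi>' r" by auto
  have s: "\<pi>' \<in> signed_perms n" using p Dn_iff by auto
  obtain ws where ws: "set ws \<subseteq> TD n" "foldl (sp_mult n) (sp_id n) ws = \<pi>'" "length ws = n - cc n \<pi>'"
    using Suc(2)[OF p(1)] by blast
  define ws2 where "ws2 = map (ext n) ws @ (if r = 0 then [] else [Gen (Suc n) r])"
  have set2: "set ws2 \<subseteq> TD (Suc n)" unfolding ws2_def using ws(1) ext_TD Gen_TD[OF Suc(1) p(2)] by auto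
  have f: "foldl (sp_mult (Suc n)) (sp_id (Suc n)) (map (ext n) ws) = ext n \<pi>'"
    using foldl_ext[OF ws(1)] ws(2) by simp
  have fold2: "foldl (sp_mult (Suc n)) (sp_id (Suc n)) ws2 = \<pi>"
  proof (cases "r = 0")
    case True
    then show ?thesis unfolding ws2_def p(3) ins_def using f mult_id_right[OF ext_SP[OF s]]
      by (simp add: Gen_def)
  next
    case False
    then show ?thesis unfolding ws2_def p(3) ins_def using f by simp
  qed
  have cn: "cc n \<pi>' \<le> n" by (rule cc_le)
  have "length ws2 = Suc n - cc (Suc n) \<pi>"
    unfolding ws2_def p(3) cc_ins[OF s Suc(1) p(2)] using ws(3) cn by auto
  then show ?case using set2 fold2 by blast
qed

lemma lenD_eq:
  assumes "1 \<le> n" "\<pi> \<in> Dn n"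
  shows "lenD n \<pi> = n - cc n \<pi>"
proof -
  obtain ws where ws: "set ws \<subseteq> TD n" "foldl (sp_mult n) (sp_id n) ws = \<pi>" "length ws = n - cc n \<pi>"
    using upper[OF assms] by blast
  show ?thesis unfolding lenD_def
  proof (rule Least_equality)
    show "\<exists>ws. length ws = n - cc n \<pi> \<and> set ws \<subseteq> TD n \<and> foldl (sp_mult n) (sp_id n) ws = \<pi>"
      using ws by blast
    fix m assume "\<exists>ws. length ws = m \<and> set ws \<subseteq> TD n \<and> foldl (sp_mult n) (sp_id n) ws = \<pi>"
    then obtain vs where vs: "length vs = m" "set vs \<subseteq> TD n" "foldl (sp_mult n) (sp_id n) vs = \<pi>" by blast
    show "n - cc n \<pi> \<le> m" using lower_words[OF vs(2)] vs by simp
  qed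
qed

theorem corollary6p9:
  fixes n :: nat and t :: "'a :: comm_ring_1"
  assumes "1 \<le> n"
  shows "(\<Sum>\<pi>\<in>Dn n. t ^ cycD_plus n \<pi>) = t * (\<Prod>i=2..n. t + of_nat (2 * i - 1))
       \<and> (\<Sum>\<pi>\<in>Dn n. t ^ lenD n \<pi>) = (\<Prod>i=2..n. 1 + of_nat (2 * i - 1) * t)"
proof
  have "(\<Sum>\<pi>\<in>Dn n. t ^ cycD_plus n \<pi>) = (\<Sum>\<pi>\<in>Dn n. t ^ cc n \<pi> * 1 ^ (n - cc n \<pi>))"
    by (rule sum.cong[OF refl]) (simp add: cyc_cc[OF _ assms] Dn_iff)
  also have "\<dots> = t * (\<Prod>i=2..n. t + of_nat (2 * i - 1) * 1)" by (rule gen_fun[OF assms])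
  finally show "(\<Sum>\<pi>\<in>Dn n. t ^ cycD_plus n \<pi>) = t * (\<Prod>i=2..n. t + of_nat (2 * i - 1))" by simp
  have "(\<Sum>\<pi>\<in>Dn n. t ^ lenD n \<pi>) = (\<Sum>\<pi>\<in>Dn n. 1 ^ cc n \<pi> * t ^ (n - cc n \<pi>))"
    by (rule sum.cong[OF refl]) (simp add: lenD_eq[OF assms])
  also have "\<dots> = 1 * (\<Prod>i=2..n. 1 + of_nat (2 * i - 1) * t)" by (rule gen_fun[OF assms])
  finally show "(\<Sum>\<pi>\<in>Dn n. t ^ lenD n \<pi>) = (\<Prod>i=2..n. 1 + of_nat (2 * i - 1) * t)" by simp
qed


end
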